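(* In the setting below, for every nonempty $A\subseteq[n]$: \[ \Pr_{\psi\sim\Psi}\big(\exists q\in\mathbb Z,\ 0\le q\le q_{\max}:\ |Y_c(\psi,q)-|A||>\varepsilon|A|\big)\le\tfrac1{16}. \]
   Context: $[N]:=\{0,\dots,N-1\}$. Fix integers $n\ge1$ and real $0<\varepsilon<1$. Let $b:=2^{\lceil\log_2(9\cdot 2^{23}\varepsilon^{-2})\rceil}$ and $k:=\lceil\tfrac{15}{2}\ln b+16\rceil$. Hash families: for $d\ge1$, identify $[2^d]$ with $\mathrm{GF}(2^d)$ via binary representation. For $k'\ge1$, $N\le 2^d$, $c\le d$, $\mathcal H_{k'}([N],[2^c])$ is the uniform distribution over tuples $(a_0,\dots,a_{k'-1})\in\mathrm{GF}(2^d)^{k'}$, each giving $x\mapsto(\sum_ia_ix^i)\bmod 2^c$ on $[N]$; $\mathcal G_{k'}([N])$ is uniform over the same tuples giving $x\mapsto\mathrm{tz}(\sum_ia_ix^i)$, $\mathrm{tz}(y)$ = number of trailing zeros of the $d$-bit representation of $y$ ($\mathrm{tz}(0)=d$). Here $d$ is a fixed integer with $2^d\ge N$, $d\ge c$. $\Psi:=\mathcal G_2([n])\times\mathcal H_2([n],[2^5b^2])\times\mathcal H_k([2^5b^2],[b])$ with the uniform product distribution; $\psi=(f,g,h)$. For fixed nonempty $A\subseteq[n]$: $\tau_0(\psi)[j]:=\max(\{f(a):a\in A,\ h(g(a))=j\}\cup\{-1\})$ for $j\in[b]$; $\tau_1(\psi,q)[j]:=\max(\tau_0(\psi)[j]-q,-1)$;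 $t_c(\psi,q):=\max_{j\in[b]}(\tau_1(\psi,q)[j]+q)-\log_2b+9$; $s_c(\psi,q):=\max(0,t_c(\psi,q))$; $p_c(\psi,q):=|\{j\in[b]:\tau_1(\psi,q)[j]+q\ge s_c(\psi,q)\}|$; $\rho^{-1}(p):=\ln(1-p/b)/\ln(1-1/b)$ for $0\le p<b$; $Y_c(\psi,q):=2^{s_c(\psi,q)}\rho^{-1}(p_c(\psi,q))$, with $Y_c:=+\infty$ if $p_c=b$; $q_{\max}:=\max(0,\lceil\log_2|A|\rceil-\log_2b)$. *)

theory Defs
  imports "HOL-Library.Z2" "HOL-Computational_Algebra.Polynomial"
          "HOL-Probability.Probability"
begin

text \<open>An element x of [2^d] is identified with the GF(2)-polynomial whose
 i-th coefficient is the i-th bit of x; GF(2^d) = GF(2)[X]/(P) for an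
 irreducible P of degree d (the modulus is a parameter).\<close>

definition to_gf2poly :: "nat \<Rightarrow> bit poly" where
  "to_gf2poly x = Poly (map (\<lambda>i. if odd (x div 2 ^ i) then 1 else 0) [0..<Suc x])"

definition from_gf2poly :: "bit poly \<Rightarrow> nat" where
  "from_gf2poly p = (\<Sum>i\<le>degree p. if coeff p i = 1 then 2 ^ i else 0)"

definition gf_poly_eval :: "bit poly \<Rightarrow> nat list \<Rightarrow> nat \<Rightarrow> nat" where
  "gf_poly_eval P as x =
     from_gf2poly ((\<Sum>i<length as. to_gf2poly (as ! i) * to_gf2poly x ^ i) mod P)"

definition tz :: "nat \<Rightarrow> nat \<Rightarrow> nat" where
  "tz d y = (if y = 0 then d else (LEAST i. odd (y div 2 ^ i)))"

definition seeds :: "nat \<Rightarrow> nat \<Rightarrow> nat list set" where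
  "seeds d k' = {as. length as = k' \<and> set as \<subseteq> {..<2 ^ d}}"

definition hash_H :: "bit poly \<Rightarrow> nat \<Rightarrow> nat list \<Rightarrow> nat \<Rightarrow> nat" where
  "hash_H P c as x = gf_poly_eval P as x mod 2 ^ c"

definition hash_G :: "bit poly \<Rightarrow> nat \<Rightarrow> nat list \<Rightarrow> nat \<Rightarrow> nat" where
  "hash_G P d as x = tz d (gf_poly_eval P as x)"

definition b_exp :: "real \<Rightarrow> nat" where
  "b_exp \<epsilon> = nat \<lceil>log 2 (9 * 2 ^ 23 / \<epsilon>\<^sup>2)\<rceil>"

definition b_of :: "real \<Rightarrow> nat" where
  "b_of \<epsilon> = 2 ^ b_exp \<epsilon>"

definition k_of :: "real \<Rightarrow> nat" where
  "k_of \<epsilon> = nat \<lceil>15 / 2 * ln (real (b_of \<epsilon>)) + 16\<rceil>"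

text \<open>A seed psi = (f,g,h) given as hash functions.\<close>

definition tau0 :: "nat set \<Rightarrow> (nat \<Rightarrow> nat) \<Rightarrow> (nat \<Rightarrow> nat) \<Rightarrow> (nat \<Rightarrow> nat) \<Rightarrow> nat \<Rightarrow> int" where
  "tau0 A f g h j = Max ({int (f a) | a. a \<in> A \<and> h (g a) = j} \<union> {-1})"

definition tau1 :: "nat set \<Rightarrow> (nat \<Rightarrow> nat) \<Rightarrow> (nat \<Rightarrow> nat) \<Rightarrow> (nat \<Rightarrow> nat) \<Rightarrow> int \<Rightarrow> nat \<Rightarrow> int" where
  "tau1 A f g h q j = max (tau0 A f g h j - q) (-1)"

definition t_c :: "nat \<Rightarrow> nat set \<Rightarrow> (nat \<Rightarrow> nat) \<Rightarrow> (nat \<Rightarrow> nat) \<Rightarrow> (nat \<Rightarrow> nat) \<Rightarrow> int \<Rightarrow> real" where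
  "t_c b A f g h q = real_of_int (Max ((\<lambda>j. tau1 A f g h q j + q) ` {..<b})) - log 2 (real b) + 9"

definition s_c :: "nat \<Rightarrow> nat set \<Rightarrow> (nat \<Rightarrow> nat) \<Rightarrow> (nat \<Rightarrow> nat) \<Rightarrow> (nat \<Rightarrow> nat) \<Rightarrow> int \<Rightarrow> real" where
  "s_c b A f g h q = max 0 (t_c b A f g h q)"

definition p_c :: "nat \<Rightarrow> nat set \<Rightarrow> (nat \<Rightarrow> nat) \<Rightarrow> (nat \<Rightarrow> nat) \<Rightarrow> (nat \<Rightarrow> nat) \<Rightarrow> int \<Rightarrow> nat" where
  "p_c b A f g h q = card {j \<in> {..<b}. real_of_int (tau1 A f g h q j + q) \<ge> s_c b A f g h q}"

definition rho_inv :: "nat \<Rightarrow> real \<Rightarrow> real" where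
  "rho_inv b p = ln (1 - p / real b) / ln (1 - 1 / real b)"

definition Y_c :: "nat \<Rightarrow> nat set \<Rightarrow> (nat \<Rightarrow> nat) \<Rightarrow> (nat \<Rightarrow> nat) \<Rightarrow> (nat \<Rightarrow> nat) \<Rightarrow> int \<Rightarrow> ereal" where
  "Y_c b A f g h q =
     (if p_c b A f g h q = b then \<infinity>
      else ereal (2 powr s_c b A f g h q * rho_inv b (real (p_c b A f g h q))))"

definition q_max :: "nat \<Rightarrow> nat set \<Rightarrow> int" where
  "q_max b A = max 0 (\<lceil>log 2 (real (card A))\<rceil> - \<lfloor>log 2 (real b)\<rfloor>)"

end

theory Submission
  imports Defs "HOL-Computational_Algebra.Computational_Algebra"
begin

lemma coeff_to_gf2poly: "coeff (to_gf2poly x) i = (if odd (x div 2 ^ i) then 1 else 0)"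
proof (cases "i \<le> x")
  case True
  then show ?thesis by (simp add: to_gf2poly_def nth_default_def)
next
  case False
  then have "x < 2 ^ i"
    using less_exp[of i] by linarith
  then show ?thesis using False by (simp add: to_gf2poly_def nth_default_def)
qed

lemma coeff_to_gf2poly_bit: "coeff (to_gf2poly x) i = (if bit x i then 1 else 0)"
  by (simp add: coeff_to_gf2poly bit_iff_odd)

lemma to_gf2poly_inj: "to_gf2poly x = to_gf2poly y \<Longrightarrow> x = y"
proof -
  assume a: "to_gf2poly x = to_gf2poly y"
  have "bit x n = bit y n" for n
    using arg_cong[OF a, of "\<lambda>p. coeff p n"] by (auto simp: coeff_to_gf2poly_bit split: if_splits)
  then show ?thesis by (simp add: bit_eq_iff)
qed

lemma degree_to_gf2poly: assumes "x < 2 ^ d" "d \<ge> 1" shows "degree (to_gf2poly x) < d"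
proof -
  have "coeff (to_gf2poly x) i = 0" if "i > d - 1" for i
  proof -
    have "(2::nat) ^ d \<le> 2 ^ i" using assms that by (intro power_increasing) auto
    then have "x < 2 ^ i" using assms by linarith
    then show ?thesis by (simp add: coeff_to_gf2poly)
  qed
  then have "degree (to_gf2poly x) \<le> d - 1" by (intro degree_le) auto
  then show ?thesis using assms by linarith
qed

lemma bit_cases: "(b::bit) = 0 \<or> b = 1"
  by (cases b) auto

lemma from_gf2poly_horner:
  assumes "degree p < d"
  shows "from_gf2poly p = horner_sum of_bool 2 (map (\<lambda>i. coeff p i = 1) [0..<d])"
proof -
  have "from_gf2poly p = (\<Sum>i<d. if coeff p i = 1 then 2 ^ i else 0)"
    unfolding from_gf2poly_def
  proof (rule sum.mono_neutral_left)
    show "\<forall>i\<in>{..<d} - {..degree p}. (if coeff p i = 1 then 2 ^ i else 0::nat) = 0"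
      by (auto simp: coeff_eq_0)
  qed (use assms in auto)
  also have "\<dots> = (\<Sum>i<d. of_bool (coeff p i = 1) * 2 ^ i)"
    by (intro sum.cong) auto
  also have "\<dots> = horner_sum of_bool 2 (map (\<lambda>i. coeff p i = 1) [0..<d])"
    unfolding horner_sum_eq_sum by (intro sum.cong) (auto simp: atLeast0LessThan)
  finally show ?thesis .
qed

lemma from_gf2poly_lt: assumes "degree p < d" shows "from_gf2poly p < 2 ^ d"
  using horner_sum_bound[of "map (\<lambda>i. coeff p i = 1) [0..<d]"]
  by (simp add: from_gf2poly_horner[OF assms])

lemma to_from_gf2poly: "to_gf2poly (from_gf2poly p) = p"
proof -
  have d: "degree p < Suc (degree p)" by simp
  show ?thesis
  proof (rule poly_eqI)
    fix n
    have "bit (from_gf2poly p) n \<longleftrightarrow> n < Suc (degree p) \<and> coeff p n = 1"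
      by (cases "n < Suc (degree p)") (simp_all add: from_gf2poly_horner[OF d] bit_horner_sum_bit_iff del: upt_Suc)
    moreover have "n \<ge> Suc (degree p) \<Longrightarrow> coeff p n = 0" by (simp add: coeff_eq_0)
    ultimately show "coeff (to_gf2poly (from_gf2poly p)) n = coeff p n"
      using bit_cases[of "coeff p n"] by (cases "n < Suc (degree p)") (auto simp: coeff_to_gf2poly_bit simp del: upt_Suc)
  qed
qed

lemma from_gf2poly_inj: "from_gf2poly p = from_gf2poly q \<Longrightarrow> p = q"
  by (metis to_from_gf2poly)

lemma poly_Poly_sum: "poly (Poly cs) (y::'a::comm_ring_1) = (\<Sum>i<length cs. cs ! i * y ^ i)"
proof (induction cs)
  case Nil then show ?case by simp
next
  case (Cons c cs)
  show ?case
    by (simp add: Cons sum.lessThan_Suc_shift sum_distrib_left ac_simps del: sum.lessThan_Suc)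
qed

lemma roots_dvd:
  fixes Q :: "bit poly poly" and P :: "bit poly"
  assumes pr: "prime_elem P"
    and "distinct ys"
    and "\<And>y y'. y \<in> set ys \<Longrightarrow> y' \<in> set ys \<Longrightarrow> y \<noteq> y' \<Longrightarrow> \<not> P dvd (y - y')"
    and "\<And>y. y \<in> set ys \<Longrightarrow> P dvd poly Q y"
    and "degree Q < length ys"
  shows "P dvd coeff Q i"
  using assms(2-5)
proof (induction ys arbitrary: Q i)
  case Nil then show ?case by simp
next
  case (Cons y ys)
  define R where "R = synthetic_div Q y"
  have QR: "Q + smult y R = pCons (poly Q y) R" unfolding R_def by (rule synthetic_div_correct)
  have cQ: "coeff Q i = coeff (pCons (poly Q y) R) i - y * coeff R i" for i
    using arg_cong[OF QR, of "\<lambda>p. coeff p i"] by (simp add: algebra_simps)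
  have Py: "P dvd poly Q y" using Cons.prems by simp
  have PR: "P dvd coeff R j" for j
  proof (cases "ys = []")
    case True
    then have "degree Q = 0" using Cons.prems by simp
    then have "R = 0" by (simp add: R_def synthetic_div_eq_0_iff)
    then show ?thesis by simp
  next
    case False
    show ?thesis
    proof (rule Cons.IH)
      show "distinct ys" using Cons.prems by simp
      show "\<not> P dvd (a - b)" if "a \<in> set ys" "b \<in> set ys" "a \<noteq> b" for a b
        using Cons.prems(2) that by simp
      have "degree Q < Suc (length ys)" using Cons.prems by simp
      moreover have "length ys \<noteq> 0" using False by simp
      ultimately show "degree R < length ys" unfolding R_def degree_synthetic_div by linarith
      fix z assume z: "z \<in> set ys"
      have "poly Q z + y * poly R z = poly Q y + z * poly R z"
        using arg_cong[OF QR, of "\<lambda>p. poly p z"] by simp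
      then have "poly Q z - poly Q y = (z - y) * poly R z" by (simp add: algebra_simps)
      moreover have "P dvd poly Q z - poly Q y" using Cons.prems z Py by (simp add: dvd_diff)
      ultimately have "P dvd (z - y) * poly R z" by simp
      moreover have "\<not> P dvd (z - y)" using Cons.prems(2) z Cons.prems(1) by auto
      ultimately show "P dvd poly R z" using prime_elem_dvd_mult_iff[OF pr] by auto
    qed
  qed
  show ?case
  proof (cases i)
    case 0 then show ?thesis using cQ[of 0] Py PR[of 0] by (simp add: dvd_diff)
  next
    case (Suc j) then show ?thesis using cQ[of i] PR[of j] PR[of i] by (simp add: dvd_diff)
  qed
qed

lemma irreducible_degree_pos:
  fixes P :: "bit poly"
  assumes "irreducible P" shows "degree P \<ge> 1"
proof (rule ccontr)
  assume "\<not> degree P \<ge> 1"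
  then have "degree P = 0" by simp
  moreover have "P \<noteq> 0" using assms by auto
  ultimately have "is_unit P" by (simp add: is_unit_iff_degree)
  then show False using assms by (simp add: irreducible_def)
qed

lemma from_gf2poly_0: "from_gf2poly 0 = 0"
  by (simp add: from_gf2poly_def)

lemma gf_eval_lt:
  assumes "irreducible P" "degree P = d"
  shows "gf_poly_eval P as x < 2 ^ d"
proof -
  have "P \<noteq> 0" using assms by auto
  then have "S mod P = 0 \<or> degree (S mod P) < d" for S using degree_mod_less[of P S] assms by auto
  moreover have "d \<ge> 1" using irreducible_degree_pos assms by auto
  ultimately show ?thesis unfolding gf_poly_eval_def
    using from_gf2poly_lt from_gf2poly_0 by (metis zero_less_numeral zero_less_power)
qed

lemma gf_eval_poly:
  "gf_poly_eval P as x = from_gf2poly (poly (Poly (map to_gf2poly as)) (to_gf2poly x) mod P)"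
  unfolding gf_poly_eval_def poly_Poly_sum by simp

lemma degree_mod_lt:
  fixes P :: "bit poly"
  assumes "irreducible P" shows "degree (S mod P) < degree P"
proof -
  have "P \<noteq> 0" using assms by auto
  then show ?thesis using degree_mod_less[of P S] irreducible_degree_pos[OF assms] by auto
qed

lemma eval_inj:
  assumes irr: "irreducible P" and dP: "degree P = d" and dist: "distinct xs"
    and xs: "set xs \<subseteq> {..<2^d}" and len: "length xs = m"
  shows "inj_on (\<lambda>low. map (gf_poly_eval P (low @ tail)) xs) (seeds d m)"
proof (rule inj_onI)
  fix l1 l2 assume l1: "l1 \<in> seeds d m" and l2: "l2 \<in> seeds d m"
    and eq: "map (gf_poly_eval P (l1 @ tail)) xs = map (gf_poly_eval P (l2 @ tail)) xs"
  have d1: "d \<ge> 1" using irreducible_degree_pos[OF irr] dP by simp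
  have pr: "prime_elem P" using irr by (rule field_poly_irreducible_imp_prime)
  have ll: "length l1 = m" "length l2 = m" "set l1 \<subseteq> {..<2^d}" "set l2 \<subseteq> {..<2^d}"
    using l1 l2 by (auto simp: seeds_def)
  define Q where "Q = Poly (map to_gf2poly (l1 @ tail)) - Poly (map to_gf2poly (l2 @ tail))"
  have cQ: "coeff Q i = nth_default 0 (map to_gf2poly (l1 @ tail)) i - nth_default 0 (map to_gf2poly (l2 @ tail)) i" for i
    unfolding Q_def coeff_diff coeff_Poly_eq by (rule refl)
  have cQ2: "coeff Q i = (if i < m then to_gf2poly (l1 ! i) - to_gf2poly (l2 ! i) else 0)" for i
    unfolding cQ nth_default_def using ll by (auto simp: nth_append)
  show "l1 = l2"
  proof (cases "m = 0")
    case True then show ?thesis using ll by simp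
  next
    case False
    have degQ: "degree Q < m"
    proof -
      have "degree Q \<le> m - 1" by (rule degree_le) (use False in \<open>auto simp: cQ2\<close>)
      then show ?thesis using False by linarith
    qed
    have roots: "P dvd coeff Q i" for i
    proof (rule roots_dvd[OF pr, of "map to_gf2poly xs"])
      show "distinct (map to_gf2poly xs)" using dist
        by (simp add: distinct_map inj_on_def to_gf2poly_inj)
      show "\<not> P dvd (y - y')" if "y \<in> set (map to_gf2poly xs)" "y' \<in> set (map to_gf2poly xs)" "y \<noteq> y'" for y y'
      proof
        assume dv: "P dvd (y - y')"
        have "degree y < d" "degree y' < d" using that xs d1 by (auto intro!: degree_to_gf2poly)
        then have "degree (y - y') < d"
          using degree_diff_le_max[of y y'] by linarith
        moreover have "y - y' \<noteq> 0" using that by simp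
        ultimately show False using dvd_imp_degree_le[OF dv] dP by simp
      qed
      show "P dvd poly Q y" if yin: "y \<in> set (map to_gf2poly xs)" for y
      proof -
        obtain x where x: "x \<in> set xs" "y = to_gf2poly x" using yin by auto
        have "gf_poly_eval P (l1 @ tail) x = gf_poly_eval P (l2 @ tail) x"
          using eq x(1) by simp
        then have "poly (Poly (map to_gf2poly (l1 @ tail))) y mod P = poly (Poly (map to_gf2poly (l2 @ tail))) y mod P"
          unfolding gf_eval_poly x(2) by (rule from_gf2poly_inj)
        then show ?thesis unfolding Q_def poly_diff by (simp add: mod_eq_dvd_iff)
      qed
      show "degree Q < length (map to_gf2poly xs)" using degQ len by simp
    qed
    show ?thesis
    proof (rule nth_equalityI)
      show "length l1 = length l2" using ll by simp
      fix i assume i: "i < length l1"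
      have "l1 ! i < 2^d" "l2 ! i < 2^d" using ll i by (auto simp: subset_iff)
      then have "degree (to_gf2poly (l1 ! i)) < d" "degree (to_gf2poly (l2 ! i)) < d"
        using d1 by (auto intro!: degree_to_gf2poly)
      then have dd: "degree (to_gf2poly (l1 ! i) - to_gf2poly (l2 ! i)) < d"
        using degree_diff_le_max[of "to_gf2poly (l1 ! i)" "to_gf2poly (l2 ! i)"] by linarith
      have "P dvd to_gf2poly (l1 ! i) - to_gf2poly (l2 ! i)" using roots[of i] cQ2[of i] i ll by simp
      then have "to_gf2poly (l1 ! i) - to_gf2poly (l2 ! i) = 0"
      proof (rule contrapos_pp)
        assume "to_gf2poly (l1 ! i) - to_gf2poly (l2 ! i) \<noteq> 0"
        then show "\<not> P dvd to_gf2poly (l1 ! i) - to_gf2poly (l2 ! i)"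
          using dvd_imp_degree_le[of P] dd dP by force
      qed
      then show "l1 ! i = l2 ! i" by (simp add: to_gf2poly_inj)
    qed
  qed
qed

lemma seeds_alt: "seeds d k = {xs. set xs \<subseteq> {..<2^d} \<and> length xs = k}"
  by (auto simp: seeds_def)

lemma card_seeds: "card (seeds d k) = 2 ^ (d * k)"
  unfolding seeds_alt by (simp add: card_lists_length_eq power_mult)

lemma finite_seeds: "finite (seeds d k)"
  unfolding seeds_alt by (simp add: finite_lists_length_eq)

lemma seeds_nonempty: "seeds d k \<noteq> {}"
  using card_seeds[of d k] by (metis card.empty power_not_zero zero_neq_numeral)

definition Lset :: "'a set list \<Rightarrow> 'a list set" where
  "Lset Bs = {ys. length ys = length Bs \<and> (\<forall>i<length Bs. ys ! i \<in> Bs ! i)}"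

lemma Lset_Cons: "Lset (B # Bs) = (\<lambda>(y, ys). y # ys) ` (B \<times> Lset Bs)"
proof (intro equalityI subsetI)
  fix zs assume z: "zs \<in> Lset (B # Bs)"
  then obtain y ys where zs: "zs = y # ys" unfolding Lset_def by (cases zs) auto
  have "y \<in> B" using z zs unfolding Lset_def by force
  moreover have "ys \<in> Lset Bs" using z zs unfolding Lset_def by force
  ultimately show "zs \<in> (\<lambda>(y, ys). y # ys) ` (B \<times> Lset Bs)" using zs by force
next
  fix zs assume "zs \<in> (\<lambda>(y, ys). y # ys) ` (B \<times> Lset Bs)"
  then obtain y ys where "zs = y # ys" "y \<in> B" "ys \<in> Lset Bs" by auto
  then show "zs \<in> Lset (B # Bs)" unfolding Lset_def by (auto simp: nth_Cons split: nat.splits)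
qed

lemma card_Lset: "card (Lset Bs) = (\<Prod>i<length Bs. card (Bs ! i))"
proof (induction Bs)
  case Nil
  have e: "Lset [] = {[]}" by (auto simp: Lset_def)
  show ?case unfolding e by simp
next
  case (Cons B Bs)
  have "inj_on (\<lambda>(y, ys). y # ys) (B \<times> Lset Bs)" by (auto simp: inj_on_def)
  then have "card (Lset (B # Bs)) = card B * card (Lset Bs)"
    unfolding Lset_Cons by (simp add: card_image card_cartesian_product)
  then show ?case using Cons by (simp add: prod.lessThan_Suc_shift del: prod.lessThan_Suc)
qed

lemma fiber_count:
  assumes irr: "irreducible P" and dP: "degree P = d" and dist: "distinct xs"
    and xs: "set xs \<subseteq> {..<2^d}" and len: "length xs = m"
    and lB: "length Bs = m" and B: "\<forall>B\<in>set Bs. B \<subseteq> {..<2^d}"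
  shows "card {low \<in> seeds d m. \<forall>i<m. gf_poly_eval P (low @ tail) (xs ! i) \<in> Bs ! i} = (\<Prod>i<m. card (Bs ! i))"
proof -
  define E where "E = (\<lambda>low. map (gf_poly_eval P (low @ tail)) xs)"
  have inj: "inj_on E (seeds d m)" unfolding E_def by (rule eval_inj[OF irr dP dist xs len])
  have sub: "E ` seeds d m \<subseteq> seeds d m"
    using gf_eval_lt[OF irr dP] len by (auto simp: E_def seeds_def)
  have "card (E ` seeds d m) = card (seeds d m)" using inj by (simp add: card_image)
  then have Eim: "E ` seeds d m = seeds d m" using sub finite_seeds by (metis card_subset_eq)
  have LS: "Lset Bs \<subseteq> seeds d m" using lB B unfolding Lset_def seeds_def
    by (auto simp: set_conv_nth subset_iff)
  have eqset: "{low \<in> seeds d m. \<forall>i<m. gf_poly_eval P (low @ tail) (xs ! i) \<in> Bs ! i} = {low \<in> seeds d m. E low \<in> Lset Bs}"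
    using len lB by (auto simp: E_def Lset_def)
  have "card {low \<in> seeds d m. E low \<in> Lset Bs} = card (E ` {low \<in> seeds d m. E low \<in> Lset Bs})"
    using inj by (intro card_image[symmetric]) (auto intro: inj_on_subset)
  also have "E ` {low \<in> seeds d m. E low \<in> Lset Bs} = {ys \<in> E ` seeds d m. ys \<in> Lset Bs}" by auto
  also have "\<dots> = Lset Bs" using Eim LS by auto
  finally show ?thesis using eqset card_Lset[of Bs] lB by simp
qed

lemma hash_count:
  assumes irr: "irreducible P" and dP: "degree P = d" and dist: "distinct xs"
    and xs: "set xs \<subseteq> {..<2^d}" and len: "length xs = m" and mk: "m \<le> k"
    and lB: "length Bs = m" and B: "\<forall>B\<in>set Bs. B \<subseteq> {..<2^d}"
  shows "card {as \<in> seeds d k. \<forall>i<m. gf_poly_eval P as (xs ! i) \<in> Bs ! i} = (\<Prod>i<m. card (Bs ! i)) * 2 ^ (d * (k - m))"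
proof -
  define \<Psi> where "\<Psi> = (\<lambda>as. \<forall>i<m. gf_poly_eval P as (xs ! i) \<in> Bs ! i)"
  define S where "S = Sigma (seeds d (k - m)) (\<lambda>t. {l \<in> seeds d m. \<Psi> (l @ t)})"
  have inj: "inj_on (\<lambda>(t, l). l @ t) S" unfolding S_def
    by (auto simp: inj_on_def seeds_def)
  have im: "(\<lambda>(t, l). l @ t) ` S = {as \<in> seeds d k. \<Psi> as}"
  proof (intro equalityI subsetI)
    fix as assume "as \<in> (\<lambda>(t, l). l @ t) ` S"
    then show "as \<in> {as \<in> seeds d k. \<Psi> as}" using mk unfolding S_def by (auto simp: seeds_def)
  next
    fix as assume a: "as \<in> {as \<in> seeds d k. \<Psi> as}"
    then have "(drop m as, take m as) \<in> S" using mk unfolding S_def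
      by (auto simp: seeds_def dest: in_set_dropD in_set_takeD)
    then show "as \<in> (\<lambda>(t, l). l @ t) ` S" by (auto intro!: image_eqI[where x="(drop m as, take m as)"])
  qed
  have "card {as \<in> seeds d k. \<Psi> as} = card S" using inj im by (metis card_image)
  also have "\<dots> = (\<Sum>t\<in>seeds d (k - m). card {l \<in> seeds d m. \<Psi> (l @ t)})"
    unfolding S_def by (rule card_SigmaI) (auto simp: finite_seeds)
  also have "\<dots> = (\<Sum>t\<in>seeds d (k - m). (\<Prod>i<m. card (Bs ! i)))"
    unfolding \<Psi>_def by (intro sum.cong refl fiber_count[OF irr dP dist xs len lB B])
  also have "\<dots> = (\<Prod>i<m. card (Bs ! i)) * 2 ^ (d * (k - m))"
    by (simp add: card_seeds)
  finally show ?thesis unfolding \<Psi>_def .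
qed

definition pr :: "'a set \<Rightarrow> ('a \<Rightarrow> bool) \<Rightarrow> real" where
  "pr \<Omega> P = real (card {x \<in> \<Omega>. P x}) / real (card \<Omega>)"

lemma hash_prob:
  assumes irr: "irreducible P" and dP: "degree P = d" and dist: "distinct xs"
    and xs: "set xs \<subseteq> {..<2^d}" and len: "length xs = m" and mk: "m \<le> k"
    and lB: "length Bs = m" and B: "\<forall>B\<in>set Bs. B \<subseteq> {..<2^d}"
  shows "pr (seeds d k) (\<lambda>as. \<forall>i<m. gf_poly_eval P as (xs ! i) \<in> Bs ! i) = (\<Prod>i<m. real (card (Bs ! i)) / 2 ^ d)"
proof -
  have "pr (seeds d k) (\<lambda>as. \<forall>i<m. gf_poly_eval P as (xs ! i) \<in> Bs ! i)
      = real ((\<Prod>i<m. card (Bs ! i)) * 2 ^ (d * (k - m))) / real (2 ^ (d * k))"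
    unfolding pr_def hash_count[OF assms] card_seeds by simp
  also have "\<dots> = (\<Prod>i<m. real (card (Bs ! i))) / 2 ^ (d * m)"
  proof -
    have "(2::real) ^ (d * k) = 2 ^ (d * (k - m)) * 2 ^ (d * m)"
      using mk by (simp flip: power_add add: add_mult_distrib2[symmetric])
    then show ?thesis by simp
  qed
  also have "\<dots> = (\<Prod>i<m. real (card (Bs ! i)) / 2 ^ d)"
    by (simp add: prod_dividef power_mult)
  finally show ?thesis .
qed


definition ex :: "'a set \<Rightarrow> ('a \<Rightarrow> real) \<Rightarrow> real" where
  "ex \<Omega> X = (\<Sum>x\<in>\<Omega>. X x) / real (card \<Omega>)"

lemma pr_ex: assumes "finite \<Omega>" shows "pr \<Omega> P = ex \<Omega> (\<lambda>x. of_bool (P x))"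
proof -
  have "(\<Sum>x\<in>\<Omega>. of_bool (P x)) = real (card (\<Omega> \<inter> {x. P x}))"
    using assms by (simp add: of_bool_def sum.If_cases)
  moreover have "{x\<in>\<Omega>. P x} = \<Omega> \<inter> {x. P x}" by auto
  ultimately show ?thesis unfolding pr_def ex_def by simp
qed

lemma pr_nonneg: "pr \<Omega> P \<ge> 0"
  unfolding pr_def by simp

lemma pr_mono:
  assumes "finite \<Omega>" "\<And>x. x \<in> \<Omega> \<Longrightarrow> P x \<Longrightarrow> Q x"
  shows "pr \<Omega> P \<le> pr \<Omega> Q"
proof -
  have "card {x \<in> \<Omega>. P x} \<le> card {x \<in> \<Omega>. Q x}" using assms by (intro card_mono) auto
  then show ?thesis unfolding pr_def by (simp add: divide_right_mono)
qed

lemma pr_cong: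
  assumes "\<And>x. x \<in> \<Omega> \<Longrightarrow> P x = Q x"
  shows "pr \<Omega> P = pr \<Omega> Q"
  unfolding pr_def using assms by (metis (mono_tags, lifting) Collect_cong)

lemma pr_false: "pr \<Omega> (\<lambda>x. False) = 0"
  unfolding pr_def by simp

lemma pr_le1: "finite \<Omega> \<Longrightarrow> pr \<Omega> P \<le> 1"
  unfolding pr_def by (cases "card \<Omega> = 0") (auto intro!: card_mono simp: divide_le_eq_1 card_gt_0_iff)

lemma pr_disj:
  assumes "finite \<Omega>"
  shows "pr \<Omega> (\<lambda>x. P x \<or> Q x) \<le> pr \<Omega> P + pr \<Omega> Q"
proof -
  have "{x \<in> \<Omega>. P x \<or> Q x} = {x \<in> \<Omega>. P x} \<union> {x \<in> \<Omega>. Q x}" by auto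
  then have "card {x \<in> \<Omega>. P x \<or> Q x} \<le> card {x \<in> \<Omega>. P x} + card {x \<in> \<Omega>. Q x}"
    by (simp add: card_Un_le)
  then show ?thesis unfolding pr_def by (simp add: add_divide_distrib[symmetric] divide_right_mono)
qed

lemma pr_exists:
  assumes "finite \<Omega>" "finite I"
  shows "pr \<Omega> (\<lambda>x. \<exists>i\<in>I. P i x) \<le> (\<Sum>i\<in>I. pr \<Omega> (P i))"
  using assms(2)
proof (induction I rule: finite_induct)
  case empty then show ?case by (simp add: pr_false)
next
  case (insert i I)
  have "pr \<Omega> (\<lambda>x. \<exists>j\<in>insert i I. P j x) = pr \<Omega> (\<lambda>x. P i x \<or> (\<exists>j\<in>I. P j x))" by simp
  also have "\<dots> \<le> pr \<Omega> (P i) + pr \<Omega> (\<lambda>x. \<exists>j\<in>I. P j x)" by (rule pr_disj[OF assms(1)])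
  also have "\<dots> \<le> pr \<Omega> (P i) + (\<Sum>j\<in>I. pr \<Omega> (P j))" using insert by simp
  finally show ?case using insert by simp
qed

lemma pr_exists_disjoint:
  assumes "finite \<Omega>" "finite I" "\<And>i j x. i \<in> I \<Longrightarrow> j \<in> I \<Longrightarrow> x \<in> \<Omega> \<Longrightarrow> P i x \<Longrightarrow> P j x \<Longrightarrow> i = j"
  shows "pr \<Omega> (\<lambda>x. \<exists>i\<in>I. P i x) = (\<Sum>i\<in>I. pr \<Omega> (P i))"
proof -
  have "{x \<in> \<Omega>. \<exists>i\<in>I. P i x} = (\<Union>i\<in>I. {x \<in> \<Omega>. P i x})" by auto
  then have "card {x \<in> \<Omega>. \<exists>i\<in>I. P i x} = (\<Sum>i\<in>I. card {x \<in> \<Omega>. P i x})"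
    using assms by (auto intro!: card_UN_disjoint)
  then show ?thesis unfolding pr_def by (simp add: sum_divide_distrib)
qed

lemma ex_add: "ex \<Omega> (\<lambda>x. X x + Y x) = ex \<Omega> X + ex \<Omega> Y"
  unfolding ex_def by (simp add: sum.distrib add_divide_distrib)

lemma ex_diff: "ex \<Omega> (\<lambda>x. X x - Y x) = ex \<Omega> X - ex \<Omega> Y"
  unfolding ex_def by (simp add: sum_subtractf diff_divide_distrib)

lemma ex_cmult: "ex \<Omega> (\<lambda>x. c * X x) = c * ex \<Omega> X"
  unfolding ex_def by (simp add: sum_distrib_left)

lemma ex_multc: "ex \<Omega> (\<lambda>x. X x * c) = ex \<Omega> X * c"
  unfolding ex_def by (simp add: sum_distrib_right)

lemma ex_const: "finite \<Omega> \<Longrightarrow> \<Omega> \<noteq> {} \<Longrightarrow> ex \<Omega> (\<lambda>x. c) = c"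
  unfolding ex_def by simp

lemma ex_sum: "ex \<Omega> (\<lambda>x. \<Sum>i\<in>I. X i x) = (\<Sum>i\<in>I. ex \<Omega> (X i))"
  unfolding ex_def by (simp add: sum.swap[of _ I] sum_divide_distrib)

lemma ex_mono: "(\<And>x. x \<in> \<Omega> \<Longrightarrow> X x \<le> Y x) \<Longrightarrow> ex \<Omega> X \<le> ex \<Omega> Y"
  unfolding ex_def by (intro divide_right_mono sum_mono) auto

lemma ex_cong: "(\<And>x. x \<in> \<Omega> \<Longrightarrow> X x = Y x) \<Longrightarrow> ex \<Omega> X = ex \<Omega> Y"
  unfolding ex_def by (metis sum.cong)

lemma ex_nonneg: "(\<And>x. x \<in> \<Omega> \<Longrightarrow> X x \<ge> 0) \<Longrightarrow> ex \<Omega> X \<ge> 0"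
  unfolding ex_def by (intro divide_nonneg_nonneg sum_nonneg) auto

lemma markov:
  assumes "finite \<Omega>" "\<And>x. x \<in> \<Omega> \<Longrightarrow> X x \<ge> 0" "t > 0"
  shows "pr \<Omega> (\<lambda>x. X x \<ge> t) \<le> ex \<Omega> X / t"
proof -
  have "pr \<Omega> (\<lambda>x. X x \<ge> t) = ex \<Omega> (\<lambda>x. of_bool (X x \<ge> t))" by (rule pr_ex[OF assms(1)])
  also have "\<dots> \<le> ex \<Omega> (\<lambda>x. X x / t)"
    using assms by (intro ex_mono) auto
  also have "\<dots> = ex \<Omega> X / t" using ex_multc[of \<Omega> X "1/t"] by simp
  finally show ?thesis .
qed

lemma chebyshev:
  assumes "finite \<Omega>" "t > 0"
  shows "pr \<Omega> (\<lambda>x. \<bar>X x - c\<bar> \<ge> t) \<le> ex \<Omega> (\<lambda>x. (X x - c)^2) / t^2"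
proof -
  have "pr \<Omega> (\<lambda>x. \<bar>X x - c\<bar> \<ge> t) = pr \<Omega> (\<lambda>x. (X x - c)^2 \<ge> t^2)"
    using assms(2) by (intro pr_cong) (metis abs_ge_zero abs_le_square_iff abs_of_pos power2_abs)
  also have "\<dots> \<le> ex \<Omega> (\<lambda>x. (X x - c)^2) / t^2"
    using assms by (intro markov) auto
  finally show ?thesis .
qed

lemma pr_prod:
  assumes "finite A" "finite B" "A \<noteq> {}" "B \<noteq> {}"
  shows "pr (A \<times> B) (\<lambda>(a, b). P a \<and> Q b) = pr A P * pr B Q"
proof -
  have "{x \<in> A \<times> B. case x of (a, b) \<Rightarrow> P a \<and> Q b} = {a \<in> A. P a} \<times> {b \<in> B. Q b}" by auto
  then show ?thesis unfolding pr_def by (simp add: card_cartesian_product)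
qed

lemma pr_fst:
  assumes "finite A" "finite B" "A \<noteq> {}" "B \<noteq> {}"
  shows "pr (A \<times> B) (\<lambda>x. P (fst x)) = pr A P"
proof -
  have "{x \<in> A \<times> B. P (fst x)} = {a \<in> A. P a} \<times> B" by auto
  then show ?thesis unfolding pr_def using assms by (simp add: card_cartesian_product)
qed

lemma pr_bound_fst:
  assumes "finite A" "finite B" "A \<noteq> {}" "B \<noteq> {}"
    and "\<And>a. a \<in> A \<Longrightarrow> pr B (\<lambda>b. Q (a, b)) \<le> c"
  shows "pr (A \<times> B) Q \<le> c"
proof -
  have "{x \<in> A \<times> B. Q x} = Sigma A (\<lambda>a. {b \<in> B. Q (a, b)})" by auto
  then have "card {x \<in> A \<times> B. Q x} = (\<Sum>a\<in>A. card {b \<in> B. Q (a, b)})"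
    using assms by (simp add: card_SigmaI)
  then have "pr (A \<times> B) Q = (\<Sum>a\<in>A. pr B (\<lambda>b. Q (a, b))) / card A"
    unfolding pr_def using assms by (simp add: card_cartesian_product sum_divide_distrib ac_simps)
  also have "\<dots> \<le> (\<Sum>a\<in>A. c) / card A"
    using assms by (intro divide_right_mono sum_mono) auto
  also have "\<dots> = c" using assms by simp
  finally show ?thesis .
qed


definition Tk :: "nat \<Rightarrow> nat \<Rightarrow> real \<Rightarrow> real" where
  "Tk n k x = (\<Sum>i<k. (-1)^i * real (n choose i) * x ^ i)"

definition Rk :: "nat \<Rightarrow> nat \<Rightarrow> real \<Rightarrow> real" where
  "Rk n k x = (1 - x) ^ n - Tk n k x"

lemma Tk_Suc: "Tk (Suc n) (Suc k) x = Tk n (Suc k) x - x * Tk n k x"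
proof -
  have "Tk (Suc n) (Suc k) x = 1 + (\<Sum>j<k. (-1)^(Suc j) * real (Suc n choose Suc j) * x ^ Suc j)"
    unfolding Tk_def by (simp add: sum.lessThan_Suc_shift del: sum.lessThan_Suc)
  also have "\<dots> = 1 + (\<Sum>j<k. (-1)^(Suc j) * real (n choose Suc j) * x ^ Suc j
       + (-1)^(Suc j) * real (n choose j) * x ^ Suc j)"
    by (intro arg_cong2[where f="(+)"] refl sum.cong) (simp_all add: algebra_simps)
  also have "\<dots> = 1 + (\<Sum>j<k. (-1)^(Suc j) * real (n choose Suc j) * x ^ Suc j)
      + (\<Sum>j<k. (-1)^(Suc j) * real (n choose j) * x ^ Suc j)"
    by (simp only: sum.distrib add.assoc)
  also have "1 + (\<Sum>j<k. (-1)^(Suc j) * real (n choose Suc j) * x ^ Suc j) = Tk n (Suc k) x"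
    unfolding Tk_def by (simp add: sum.lessThan_Suc_shift del: sum.lessThan_Suc)
  also have "(\<Sum>j<k. (-1)^(Suc j) * real (n choose j) * x ^ Suc j) = - x * Tk n k x"
    unfolding Tk_def by (simp add: sum_distrib_left algebra_simps)
  finally show ?thesis by simp
qed

lemma Rk_bound:
  assumes "0 \<le> x" "x \<le> 1"
  shows "0 \<le> (-1)^k * Rk n k x \<and> (-1)^k * Rk n k x \<le> real (n choose k) * x ^ k"
proof (induction n arbitrary: k)
  case 0
  then show ?case
    by (cases k) (auto simp: Rk_def Tk_def sum.lessThan_Suc_shift simp del: sum.lessThan_Suc)
next
  case (Suc n)
  show ?case
  proof (cases k)
    case 0
    have "(1 - x) ^ Suc n \<le> 1" using assms by (intro power_le_one) auto
    then show ?thesis using 0 assms by (simp add: Rk_def Tk_def)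
  next
    case (Suc k')
    have R: "Rk (Suc n) (Suc k') x = Rk n (Suc k') x - x * Rk n k' x"
      unfolding Rk_def Tk_Suc by (simp add: algebra_simps)
    have e: "(-1)^k * Rk (Suc n) k x = (-1)^k * Rk n k x + x * ((-1)^k' * Rk n k' x)"
      unfolding Suc R by (simp add: algebra_simps)
    have i1: "0 \<le> (-1)^k * Rk n k x" "(-1)^k * Rk n k x \<le> real (n choose k) * x ^ k"
      using Suc.IH[of k] by auto
    have i2: "0 \<le> (-1)^k' * Rk n k' x" "(-1)^k' * Rk n k' x \<le> real (n choose k') * x ^ k'"
      using Suc.IH[of k'] by auto
    have "x * ((-1)^k' * Rk n k' x) \<le> x * (real (n choose k') * x ^ k')"
      using i2 assms by (intro mult_left_mono) auto
    moreover have "real (Suc n choose k) * x ^ k = real (n choose k) * x ^ k + x * (real (n choose k') * x ^ k')"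
      unfolding Suc by (simp add: algebra_simps)
    ultimately show ?thesis unfolding e using i1 i2 assms by (auto intro: mult_nonneg_nonneg)
  qed
qed

lemma indicator_expand:
  "of_bool (N = 0) = Tk N k 1 + Rk N k 1"
  unfolding Rk_def by (cases N) auto

lemma pow_diff_upper:
  fixes a c :: real
  assumes "0 \<le> c" "c \<le> a"
  shows "a ^ Suc n - c ^ Suc n \<le> real (Suc n) * a ^ n * (a - c)"
proof (induction n)
  case 0 then show ?case by simp
next
  case (Suc n)
  have "a ^ Suc (Suc n) - c ^ Suc (Suc n) = a * (a ^ Suc n - c ^ Suc n) + c ^ Suc n * (a - c)"
    by (simp add: algebra_simps)
  also have "\<dots> \<le> a * (real (Suc n) * a ^ n * (a - c)) + a ^ Suc n * (a - c)"
    using assms Suc by (intro add_mono mult_left_mono mult_right_mono power_mono) auto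
  also have "\<dots> = real (Suc (Suc n)) * a ^ Suc n * (a - c)" by (simp add: algebra_simps)
  finally show ?case .
qed

lemma pow_diff_lower:
  fixes a c :: real
  assumes "0 \<le> c" "c \<le> a"
  shows "real (Suc n) * c ^ n * (a - c) \<le> a ^ Suc n - c ^ Suc n"
proof (induction n)
  case 0 then show ?case by simp
next
  case (Suc n)
  have "real (Suc (Suc n)) * c ^ Suc n * (a - c) = c * (real (Suc n) * c ^ n * (a - c)) + c ^ Suc n * (a - c)"
    by (simp add: algebra_simps)
  also have "\<dots> \<le> a * (a ^ Suc n - c ^ Suc n) + c ^ Suc n * (a - c)"
  proof -
    have "0 \<le> a ^ Suc n - c ^ Suc n" using assms power_mono[of c a "Suc n"] by simp
    then have "c * (real (Suc n) * c ^ n * (a - c)) \<le> c * (a ^ Suc n - c ^ Suc n)"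
      using Suc assms by (intro mult_left_mono) auto
    also have "\<dots> \<le> a * (a ^ Suc n - c ^ Suc n)"
      using assms \<open>0 \<le> a ^ Suc n - c ^ Suc n\<close> by (intro mult_right_mono) auto
    finally show ?thesis by simp
  qed
  also have "\<dots> = a ^ Suc (Suc n) - c ^ Suc (Suc n)" by (simp add: algebra_simps)
  finally show ?case .
qed

lemma var_full_bound:
  fixes x :: real and Z :: nat
  assumes "0 < x" "x \<le> 1/2" "Z \<ge> 1"
  shows "(1/x) * (1-x)^Z + (1/x) * (1/x - 1) * (1-2*x)^Z - (1/x)^2 * ((1-x)^Z)^2 \<le> real Z ^ 2 * x"
proof -
  obtain m where m: "Z = Suc m" using assms by (cases Z) auto
  define u where "u = (1-x)^Z"
  define v where "v = (1-2*x)^Z"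
  have u1: "1 - u \<le> Z * x"
    using Bernoulli_inequality[of "-x" Z] assms unfolding u_def by simp
  have u0: "0 \<le> u" "u \<le> 1" unfolding u_def using assms by (auto intro: power_le_one)
  have c0: "0 \<le> 1 - 2*x" "1 - 2*x \<le> (1-x)^2" using assms by (auto simp: power2_eq_square algebra_simps)
  have uv: "u^2 - v \<ge> real Z * (1-2*x)^m * x^2"
  proof -
    have "real (Suc m) * (1-2*x)^m * ((1-x)^2 - (1-2*x)) \<le> ((1-x)^2)^Suc m - (1-2*x)^Suc m"
      by (rule pow_diff_lower[OF c0])
    moreover have "(1-x)^2 - (1-2*x) = x^2" by (simp add: power2_eq_square algebra_simps)
    moreover have "((1-x)^2)^Suc m = u^2" unfolding u_def m by (metis power_mult mult.commute)
    ultimately show ?thesis unfolding v_def m by simp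
  qed
  have "(1/x) * u + (1/x) * (1/x - 1) * v - (1/x)^2 * u^2 = (1/x) * u * (1 - u) - (1/x) * (1/x - 1) * (u^2 - v)"
    using assms by (simp add: field_simps power2_eq_square)
  also have "\<dots> \<le> (1/x) * u * (Z * x) - (1/x) * (1/x - 1) * (real Z * (1-2*x)^m * x^2)"
  proof (intro diff_mono mult_left_mono u1 uv)
    show "0 \<le> 1 / x * u" using assms u0 by simp
    show "0 \<le> 1 / x * (1 / x - 1)" using assms by (simp add: field_simps)
  qed
  also have "\<dots> = Z * (u - (1 - x) * (1-2*x)^m)"
    using assms by (simp add: field_simps power2_eq_square)
  also have "u - (1 - x) * (1-2*x)^m = (1 - x) * ((1-x)^m - (1-2*x)^m)"
    unfolding u_def m by (simp add: algebra_simps)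
  also have "\<dots> \<le> 1 * (real m * x)"
  proof (rule mult_mono)
    show "1 - x \<le> 1" using assms by simp
    show "0 \<le> (1::real)" by simp
    show "0 \<le> (1-x)^m - (1-2*x)^m" using power_mono[of "1-2*x" "1-x" m] assms by simp
    show "(1 - x) ^ m - (1 - 2 * x) ^ m \<le> real m * x"
    proof (cases m)
      case 0 then show ?thesis by simp
    next
      case (Suc m')
      have "(1 - x) ^ Suc m' - (1 - 2 * x) ^ Suc m' \<le> real (Suc m') * (1-x)^m' * ((1-x) - (1-2*x))"
        using assms by (intro pow_diff_upper) auto
      also have "\<dots> \<le> real (Suc m') * 1 * x"
        using assms by (intro mult_mono power_le_one) auto
      finally show ?thesis using Suc by simp
    qed
  qed
  finally have "(1/x) * u + (1/x) * (1/x - 1) * v - (1/x)^2 * u^2 \<le> Z * (real m * x)"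
    using assms by (simp add: mult_left_mono)
  also have "\<dots> \<le> real Z ^ 2 * x" using m assms by (simp add: power2_eq_square)
  finally show ?thesis unfolding u_def v_def by simp
qed

lemma card_filter_sum: "finite A \<Longrightarrow> real (card {x\<in>A. P x}) = (\<Sum>x\<in>A. of_bool (P x))"
proof -
  assume a: "finite A"
  have "(\<Sum>x\<in>A. of_bool (P x)) = real (card (A \<inter> {x. P x}))"
    using a by (simp add: of_bool_def sum.If_cases)
  moreover have "{x\<in>A. P x} = A \<inter> {x. P x}" by auto
  ultimately show ?thesis by simp
qed

lemma ex_var:
  assumes "finite \<Omega>" "\<Omega> \<noteq> {}"
  shows "ex \<Omega> (\<lambda>x. (X x - ex \<Omega> X)^2) = ex \<Omega> (\<lambda>x. (X x)^2) - (ex \<Omega> X)^2"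
proof -
  have "ex \<Omega> (\<lambda>x. (X x - ex \<Omega> X)^2) = ex \<Omega> (\<lambda>x. (X x)^2 - 2 * ex \<Omega> X * X x + (ex \<Omega> X)^2)"
    by (intro ex_cong) (simp add: power2_eq_square algebra_simps)
  also have "\<dots> = ex \<Omega> (\<lambda>x. (X x)^2) - 2 * ex \<Omega> X * ex \<Omega> X + (ex \<Omega> X)^2"
    by (simp add: ex_add ex_diff ex_cmult ex_const assms)
  finally show ?thesis by (simp add: power2_eq_square)
qed

lemma choose_pow_le:
  fixes y :: real assumes "y \<ge> 0"
  shows "real (Z choose k) * y ^ k \<le> (real Z * y) ^ k"
proof (cases "k \<le> Z")
  case True
  have "real (Z choose k) \<le> real Z ^ k" using binomial_le_pow[OF True] by (metis of_nat_le_iff of_nat_power)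
  then show ?thesis using assms by (simp add: power_mult_distrib mult_right_mono)
next
  case False then show ?thesis using assms by (simp add: binomial_eq_0)
qed

lemma sum_diag:
  fixes A B :: real and b :: nat
  assumes "\<And>j j'. j < b \<Longrightarrow> j' < b \<Longrightarrow> f j j' \<le> (if j = j' then A else B)"
  shows "(\<Sum>j<b. \<Sum>j'<b. f j j') \<le> real b * A + real b * (real b - 1) * B"
proof -
  have "(\<Sum>j<b. \<Sum>j'<b. f j j') \<le> (\<Sum>j<b. \<Sum>j'<b. (if j = j' then A else B))"
    using assms by (intro sum_mono) auto
  also have "(\<Sum>j'<b. (if j = j' then A else B)) = A + (real b - 1) * B" if "j < b" for j
  proof -
    have "(\<Sum>j'<b. (if j = j' then A else B)) = (if j = j then A else B) + (\<Sum>j'\<in>{..<b} - {j}. (if j = j' then A else B))"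
      using that by (intro sum.remove) auto
    also have "(\<Sum>j'\<in>{..<b} - {j}. (if j = j' then A else B)) = (\<Sum>j'\<in>{..<b} - {j}. B)"
      by (intro sum.cong) auto
    also have "\<dots> = (real b - 1) * B" using that by (simp add: of_nat_diff)
    finally show ?thesis by simp
  qed
  then have "(\<Sum>j<b. \<Sum>j'<b. (if j = j' then A else B)) = (\<Sum>j<b. A + (real b - 1) * B)"
    by (intro sum.cong) auto
  also have "\<dots> = real b * A + real b * (real b - 1) * B" by (simp add: algebra_simps)
  finally show ?thesis .
qed

lemma balls_bins:
  fixes \<Omega> :: "'a set" and H :: "'a \<Rightarrow> nat \<Rightarrow> nat" and S :: "nat set" and b k :: nat and \<delta> :: real
  assumes fin: "finite \<Omega>" "\<Omega> \<noteq> {}" "finite S"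
    and rng: "\<And>\<omega> x. \<omega> \<in> \<Omega> \<Longrightarrow> x \<in> S \<Longrightarrow> H \<omega> x < b"
    and kw: "\<And>T B. T \<subseteq> S \<Longrightarrow> card T \<le> k \<Longrightarrow> B \<subseteq> {..<b} \<Longrightarrow>
               pr \<Omega> (\<lambda>\<omega>. \<forall>x\<in>T. H \<omega> x \<in> B) = (real (card B) / b) ^ card T"
    and Z1: "card S \<ge> 1" and Zb: "4 * card S \<le> b" and k1: "k \<ge> 1"
    and pos: "\<delta> * card S > b / 2^k"
  shows "pr \<Omega> (\<lambda>\<omega>. \<bar>real (card (H \<omega> ` S)) - b * (1 - (1 - 1/b) ^ card S)\<bar> > \<delta> * card S)
     \<le> (real (card S)^2 / b + 3 * real b^2 / 2^k) / (\<delta> * card S - b / 2^k)^2"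
proof -
  define Z where "Z = card S"
  have b4: "real b \<ge> 4" using Zb Z1 by linarith
  have binom: "ex \<Omega> (\<lambda>\<omega>. real (card {x\<in>S. H \<omega> x \<in> B} choose i)) = real (Z choose i) * (card B / b)^i"
    if B: "B \<subseteq> {..<b}" and i: "i \<le> k" for B i
  proof -
    define Sub where "Sub = {T. T \<subseteq> S \<and> card T = i}"
    have finSub: "finite Sub" unfolding Sub_def using fin by auto
    have "real (card {x\<in>S. H \<omega> x \<in> B} choose i) = (\<Sum>T\<in>Sub. of_bool (\<forall>x\<in>T. H \<omega> x \<in> B))" for \<omega>
    proof -
      have "card {x\<in>S. H \<omega> x \<in> B} choose i = card {T. T \<subseteq> {x\<in>S. H \<omega> x \<in> B} \<and> card T = i}"
        using fin by (simp add: n_subsets)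
      also have "{T. T \<subseteq> {x\<in>S. H \<omega> x \<in> B} \<and> card T = i} = {T\<in>Sub. \<forall>x\<in>T. H \<omega> x \<in> B}"
        unfolding Sub_def by auto
      finally show ?thesis using card_filter_sum[OF finSub] by simp
    qed
    then have "ex \<Omega> (\<lambda>\<omega>. real (card {x\<in>S. H \<omega> x \<in> B} choose i)) = (\<Sum>T\<in>Sub. ex \<Omega> (\<lambda>\<omega>. of_bool (\<forall>x\<in>T. H \<omega> x \<in> B)))"
      by (simp add: ex_sum)
    also have "\<dots> = (\<Sum>T\<in>Sub. (card B / b)^i)"
    proof (intro sum.cong refl)
      fix T assume "T \<in> Sub"
      then have "T \<subseteq> S" "card T = i" unfolding Sub_def by auto
      then show "ex \<Omega> (\<lambda>\<omega>. of_bool (\<forall>x\<in>T. H \<omega> x \<in> B)) = (card B / b)^i"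
        using kw[of T B] B i by (simp add: pr_ex[OF fin(1), symmetric])
    qed
    also have "\<dots> = real (Z choose i) * (card B / b)^i"
      unfolding Sub_def Z_def using fin by (simp add: n_subsets)
    finally show ?thesis .
  qed
  have emp: "\<bar>pr \<Omega> (\<lambda>\<omega>. \<forall>x\<in>S. H \<omega> x \<notin> B) - (1 - card B / b)^Z\<bar> \<le> real (Z choose k) * (card B / b)^k"
    if B: "B \<subseteq> {..<b}" for B
  proof -
    define N where "N = (\<lambda>\<omega>. card {x\<in>S. H \<omega> x \<in> B})"
    define x where "x = real (card B) / b"
    have x01: "0 \<le> x" "x \<le> 1" unfolding x_def using B b4 card_mono[OF _ B]
      by (auto simp: divide_le_eq_1)
    have "pr \<Omega> (\<lambda>\<omega>. \<forall>x\<in>S. H \<omega> x \<notin> B) = ex \<Omega> (\<lambda>\<omega>. of_bool (N \<omega> = 0))"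
      unfolding pr_ex[OF fin(1)] N_def using fin by (intro ex_cong) auto
    also have "\<dots> = ex \<Omega> (\<lambda>\<omega>. Tk (N \<omega>) k 1) + ex \<Omega> (\<lambda>\<omega>. Rk (N \<omega>) k 1)"
      by (subst indicator_expand[of _ k]) (simp add: ex_add)
    also have "ex \<Omega> (\<lambda>\<omega>. Tk (N \<omega>) k 1) = Tk Z k x"
      unfolding Tk_def by (simp add: ex_sum ex_cmult N_def binom[OF B] x_def mult.assoc)
    finally have e1: "pr \<Omega> (\<lambda>\<omega>. \<forall>x\<in>S. H \<omega> x \<notin> B) = Tk Z k x + ex \<Omega> (\<lambda>\<omega>. Rk (N \<omega>) k 1)" .
    have e2: "(1 - x)^Z = Tk Z k x + Rk Z k x" unfolding Rk_def by simp
    define sg where "sg = ((-1::real)^k)"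
    have sg: "\<bar>sg\<bar> = 1" unfolding sg_def by simp
    have a0: "0 \<le> sg * ex \<Omega> (\<lambda>\<omega>. Rk (N \<omega>) k 1)"
      unfolding sg_def ex_cmult[symmetric] using Rk_bound[of 1] by (intro ex_nonneg) auto
    have a1: "sg * ex \<Omega> (\<lambda>\<omega>. Rk (N \<omega>) k 1) \<le> real (Z choose k) * x^k"
    proof -
      have "sg * ex \<Omega> (\<lambda>\<omega>. Rk (N \<omega>) k 1) \<le> ex \<Omega> (\<lambda>\<omega>. real (N \<omega> choose k))"
        unfolding sg_def ex_cmult[symmetric] using Rk_bound[of 1] by (intro ex_mono) auto
      also have "\<dots> = real (Z choose k) * x^k" unfolding N_def x_def by (rule binom[OF B order.refl])
      finally show ?thesis .
    qed
    have c0: "0 \<le> sg * Rk Z k x" "sg * Rk Z k x \<le> real (Z choose k) * x^k"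
      unfolding sg_def using Rk_bound[OF x01] by auto
    have "\<bar>pr \<Omega> (\<lambda>\<omega>. \<forall>x\<in>S. H \<omega> x \<notin> B) - (1 - x)^Z\<bar> = \<bar>sg * ex \<Omega> (\<lambda>\<omega>. Rk (N \<omega>) k 1) - sg * Rk Z k x\<bar>"
      unfolding e1 e2 using sg by (simp add: abs_mult right_diff_distrib[symmetric] abs_minus_commute)
    also have "\<dots> \<le> real (Z choose k) * x^k" using a0 a1 c0 by linarith
    finally show ?thesis unfolding x_def .
  qed
  define u where "u = (1 - 1/b)^Z"
  define v where "v = (1 - 2/b)^Z"
  define \<eta> where "\<eta> = (1::real) / 2^k"
  have \<eta>0: "0 \<le> \<eta>" unfolding \<eta>_def by simp
  have \<eta>bound: "real (Z choose k) * (c / b)^k \<le> \<eta>" if "0 \<le> c" "c \<le> 2" for c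
  proof -
    have "real (Z choose k) * (c / b)^k \<le> (real Z * (c / b))^k" using that by (intro choose_pow_le) auto
    also have "\<dots> \<le> (1/2)^k"
    proof (intro power_mono)
      have "real Z * c \<le> real Z * 2" using that by (intro mult_left_mono) auto
      also have "\<dots> \<le> b / 2" using Zb unfolding Z_def by simp
      finally show "real Z * (c / b) \<le> 1/2" using b4 by (simp add: field_simps)
    qed (use that in auto)
    finally show ?thesis unfolding \<eta>_def by (simp add: power_divide)
  qed
  define e where "e = (\<lambda>j \<omega>. of_bool (\<forall>x\<in>S. H \<omega> x \<notin> {j}) :: real)"
  define Y where "Y = (\<lambda>\<omega>. real b - real (card (H \<omega> ` S)))"
  have Ysum: "Y \<omega> = (\<Sum>j<b. e j \<omega>)" if "\<omega> \<in> \<Omega>" for \<omega>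
  proof -
    have sub: "H \<omega> ` S \<subseteq> {..<b}" using rng that by auto
    have "(\<Sum>j<b. e j \<omega>) = real (card {j\<in>{..<b}. \<forall>x\<in>S. H \<omega> x \<notin> {j}})"
      unfolding e_def by (rule card_filter_sum[symmetric]) simp
    also have "{j\<in>{..<b}. \<forall>x\<in>S. H \<omega> x \<notin> {j}} = {..<b} - H \<omega> ` S" by auto
    also have "card ({..<b} - H \<omega> ` S) = b - card (H \<omega> ` S)"
      using sub by (simp add: card_Diff_subset finite_subset)
    also have "card (H \<omega> ` S) \<le> b" using sub by (metis card_lessThan card_mono finite_lessThan)
    ultimately show ?thesis unfolding Y_def by (simp add: of_nat_diff)
  qed
  have pe: "pr \<Omega> (\<lambda>\<omega>. \<forall>x\<in>S. H \<omega> x \<notin> B) = ex \<Omega> (\<lambda>\<omega>. of_bool (\<forall>x\<in>S. H \<omega> x \<notin> B))" for B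
    by (rule pr_ex[OF fin(1)])
  have EY: "\<bar>ex \<Omega> Y - b * u\<bar> \<le> b * \<eta>"
  proof -
    have "ex \<Omega> Y = ex \<Omega> (\<lambda>\<omega>. \<Sum>j<b. e j \<omega>)" by (rule ex_cong) (simp add: Ysum)
    also have "\<dots> = (\<Sum>j<b. ex \<Omega> (e j))" by (rule ex_sum)
    also have "\<dots> = (\<Sum>j<b. pr \<Omega> (\<lambda>\<omega>. \<forall>x\<in>S. H \<omega> x \<notin> {j}))"
      unfolding e_def by (simp only: pe)
    finally have "ex \<Omega> Y = (\<Sum>j<b. pr \<Omega> (\<lambda>\<omega>. \<forall>x\<in>S. H \<omega> x \<notin> {j}))" .
    moreover have "\<bar>pr \<Omega> (\<lambda>\<omega>. \<forall>x\<in>S. H \<omega> x \<notin> {j}) - u\<bar> \<le> \<eta>" if "j < b" for j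
    proof -
      have "\<bar>pr \<Omega> (\<lambda>\<omega>. \<forall>x\<in>S. H \<omega> x \<notin> {j}) - u\<bar> \<le> real (Z choose k) * (1 / b)^k"
        using emp[of "{j}"] that unfolding u_def by simp
      also have "\<dots> \<le> \<eta>" using \<eta>bound[of 1] by simp
      finally show ?thesis .
    qed
    ultimately have "\<bar>ex \<Omega> Y - (\<Sum>j<b. u)\<bar> \<le> (\<Sum>j<(b::nat). \<eta>)"
      by (simp only: sum_subtractf[symmetric]) (intro order.trans[OF sum_abs] sum_mono, simp)
    then show ?thesis by simp
  qed
  have EY2: "ex \<Omega> (\<lambda>\<omega>. (Y \<omega>)^2) \<le> real b * (u + \<eta>) + real b * (real b - 1) * (v + \<eta>)"
  proof -
    have "ex \<Omega> (\<lambda>\<omega>. (Y \<omega>)^2) = ex \<Omega> (\<lambda>\<omega>. \<Sum>j<b. \<Sum>j'<b. of_bool (\<forall>x\<in>S. H \<omega> x \<notin> {j, j'}))"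
    proof (intro ex_cong)
      fix \<omega> assume w: "\<omega> \<in> \<Omega>"
      have "(Y \<omega>)^2 = (\<Sum>j<b. \<Sum>j'<b. e j \<omega> * e j' \<omega>)"
        unfolding Ysum[OF w] power2_eq_square by (simp add: sum_product)
      also have "\<dots> = (\<Sum>j<b. \<Sum>j'<b. of_bool (\<forall>x\<in>S. H \<omega> x \<notin> {j, j'}))"
        unfolding e_def by (intro sum.cong refl) auto
      finally show "(Y \<omega>)^2 = \<dots>" .
    qed
    also have "\<dots> = (\<Sum>j<b. \<Sum>j'<b. pr \<Omega> (\<lambda>\<omega>. \<forall>x\<in>S. H \<omega> x \<notin> {j, j'}))"
      by (simp only: ex_sum pe)
    also have "\<dots> \<le> real b * (u + \<eta>) + real b * (real b - 1) * (v + \<eta>)"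
    proof (rule sum_diag)
      fix j j' assume j: "j < b" "j' < b"
      show "pr \<Omega> (\<lambda>\<omega>. \<forall>x\<in>S. H \<omega> x \<notin> {j, j'}) \<le> (if j = j' then u + \<eta> else v + \<eta>)"
      proof (cases "j = j'")
        case True
        have "\<bar>pr \<Omega> (\<lambda>\<omega>. \<forall>x\<in>S. H \<omega> x \<notin> {j, j'}) - u\<bar> \<le> real (Z choose k) * (1 / b)^k"
          using emp[of "{j}"] j True unfolding u_def by simp
        also have "\<dots> \<le> \<eta>" using \<eta>bound[of 1] by simp
        finally show ?thesis using True by simp
      next
        case False
        have "\<bar>pr \<Omega> (\<lambda>\<omega>. \<forall>x\<in>S. H \<omega> x \<notin> {j, j'}) - v\<bar> \<le> real (Z choose k) * (2 / b)^k"
          using emp[of "{j, j'}"] j False unfolding v_def by simp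
        also have "\<dots> \<le> \<eta>" using \<eta>bound[of 2] by simp
        finally show ?thesis using False by simp
      qed
    qed
    finally show ?thesis .
  qed
  have u34: "u \<ge> 3/4"
  proof -
    have "1 + real Z * (- (1/b)) \<le> (1 + - (1/b))^Z" using b4 by (intro Bernoulli_inequality) auto
    moreover have "real Z / b \<le> 1/4" using Zb b4 unfolding Z_def by (simp add: field_simps)
    ultimately show ?thesis unfolding u_def by simp
  qed
  have \<eta>small: "\<eta> \<le> 1/2"
  proof -
    have "(2::real)^1 \<le> 2^k" by (rule power_increasing) (use k1 in auto)
    then show ?thesis unfolding \<eta>_def by (simp add: field_simps)
  qed
  have Var: "ex \<Omega> (\<lambda>\<omega>. (Y \<omega> - ex \<Omega> Y)^2) \<le> real Z^2 / b + 3 * b^2 * \<eta>"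
  proof -
    have low: "b * (u - \<eta>) \<le> ex \<Omega> Y" using EY by (simp add: abs_le_iff algebra_simps)
    have low0: "0 \<le> b * (u - \<eta>)" using u34 \<eta>small by simp
    have sq: "(b * (u - \<eta>))^2 \<le> (ex \<Omega> Y)^2" using low low0 by (intro power_mono) auto
    have full: "b * u + real b * (real b - 1) * v - b^2 * u^2 \<le> real Z^2 / b"
    proof -
      have "(1/(1/b)) * (1 - 1/b)^Z + (1/(1/b)) * (1/(1/b) - 1) * (1 - 2*(1/b))^Z - (1/(1/b))^2 * ((1 - 1/b)^Z)^2
            \<le> real Z^2 * (1/b)"
        using b4 Z1 unfolding Z_def by (intro var_full_bound) auto
      then show ?thesis unfolding u_def v_def by simp
    qed
    have "ex \<Omega> (\<lambda>\<omega>. (Y \<omega> - ex \<Omega> Y)^2) = ex \<Omega> (\<lambda>\<omega>. (Y \<omega>)^2) - (ex \<Omega> Y)^2"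
      by (rule ex_var[OF fin(1,2)])
    also have "\<dots> \<le> b * (u + \<eta>) + real b * (real b - 1) * (v + \<eta>) - (b * (u - \<eta>))^2"
      using EY2 sq by linarith
    also have "\<dots> = (b * u + real b * (real b - 1) * v - b^2 * u^2) + b * \<eta> + real b * (real b - 1) * \<eta> + 2 * b^2 * u * \<eta> - b^2 * \<eta>^2"
      by (simp add: power2_eq_square algebra_simps)
    also have "\<dots> \<le> real Z^2 / b + b^2 * \<eta> + 2 * b^2 * \<eta>"
    proof -
      have "b * \<eta> + real b * (real b - 1) * \<eta> = b^2 * \<eta>" by (simp add: power2_eq_square algebra_simps)
      moreover have "2 * b^2 * u * \<eta> \<le> 2 * b^2 * \<eta>"
      proof -
        have "u \<le> 1" unfolding u_def using b4 by (intro power_le_one) auto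
        then have "u * \<eta> \<le> 1 * \<eta>" using \<eta>0 by (intro mult_right_mono) auto
        then have "(real b)^2 * (u * \<eta>) \<le> (real b)^2 * \<eta>" by (intro mult_left_mono) auto
        then show ?thesis by (simp add: mult.assoc)
      qed
      moreover have "0 \<le> b^2 * \<eta>^2" by simp
      ultimately show ?thesis using full by linarith
    qed
    finally show ?thesis by (simp add: algebra_simps)
  qed
  define p where "p = (\<lambda>\<omega>. real (card (H \<omega> ` S)))"
  have pY: "p \<omega> = b - Y \<omega>" for \<omega> unfolding p_def Y_def by simp
  have Ep: "ex \<Omega> p = b - ex \<Omega> Y"
    unfolding pY by (simp add: ex_diff ex_const fin)
  have Varp: "ex \<Omega> (\<lambda>\<omega>. (p \<omega> - ex \<Omega> p)^2) = ex \<Omega> (\<lambda>\<omega>. (Y \<omega> - ex \<Omega> Y)^2)"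
    unfolding pY Ep by (intro ex_cong) (simp add: power2_eq_square algebra_simps)
  define t where "t = \<delta> * Z - b * \<eta>"
  have t0: "t > 0" unfolding t_def \<eta>_def using pos unfolding Z_def by simp
  have "pr \<Omega> (\<lambda>\<omega>. \<bar>p \<omega> - b * (1 - u)\<bar> > \<delta> * Z) \<le> pr \<Omega> (\<lambda>\<omega>. \<bar>p \<omega> - ex \<Omega> p\<bar> \<ge> t)"
  proof (rule pr_mono[OF fin(1)])
    fix \<omega> assume "\<bar>p \<omega> - b * (1 - u)\<bar> > \<delta> * Z"
    moreover have "\<bar>ex \<Omega> p - b * (1 - u)\<bar> \<le> b * \<eta>" using EY unfolding Ep by (simp add: algebra_simps abs_minus_commute)
    ultimately show "\<bar>p \<omega> - ex \<Omega> p\<bar> \<ge> t" unfolding t_def by linarith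
  qed
  also have "\<dots> \<le> ex \<Omega> (\<lambda>\<omega>. (p \<omega> - ex \<Omega> p)^2) / t^2" by (rule chebyshev[OF fin(1) t0])
  also have "\<dots> \<le> (real Z^2 / b + 3 * b^2 * \<eta>) / t^2"
    unfolding Varp using Var t0 by (intro divide_right_mono) auto
  finally show ?thesis unfolding p_def u_def t_def \<eta>_def Z_def by simp
qed


lemma tz_ge_iff:
  assumes "y < 2 ^ d" "s \<le> d"
  shows "s \<le> tz d y \<longleftrightarrow> 2 ^ s dvd y"
proof (cases "y = 0")
  case True then show ?thesis using assms by (simp add: tz_def)
next
  case False
  have ex: "\<exists>i. odd (y div 2 ^ i)" using False bit_eq_iff[of y 0] by (auto simp: bit_iff_odd)
  have "s \<le> (LEAST i. odd (y div 2 ^ i)) \<longleftrightarrow> (\<forall>i<s. \<not> odd (y div 2 ^ i))"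
  proof
    assume "s \<le> (LEAST i. odd (y div 2 ^ i))"
    then show "\<forall>i<s. \<not> odd (y div 2 ^ i)"
    proof (intro allI impI)
      fix i assume "i < s" "s \<le> (LEAST i. odd (y div 2 ^ i))"
      then have "i < (LEAST i. odd (y div 2 ^ i))" by linarith
      then show "\<not> odd (y div 2 ^ i)" by (rule not_less_Least)
    qed
  next
    assume a: "\<forall>i<s. \<not> odd (y div 2 ^ i)"
    show "s \<le> (LEAST i. odd (y div 2 ^ i))"
      using LeastI_ex[OF ex] a not_le by blast
  qed
  also have "\<dots> \<longleftrightarrow> (\<forall>i<s. \<not> bit y i)" by (simp add: bit_iff_odd)
  also have "\<dots> \<longleftrightarrow> take_bit s y = 0"
    by (auto simp: bit_eq_iff[of "take_bit s y" 0] bit_take_bit_iff)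
  also have "\<dots> \<longleftrightarrow> 2 ^ s dvd y" by (simp add: take_bit_eq_mod mod_eq_0_iff_dvd)
  finally show ?thesis using False by (simp add: tz_def)
qed

lemma tz_le:
  assumes "y < 2 ^ d" shows "tz d y \<le> d"
proof (cases "y = 0")
  case True then show ?thesis by (simp add: tz_def)
next
  case False
  have "\<not> 2 ^ d dvd y" using False assms by (meson dvd_imp_le linorder_not_le neq0_conv)
  then have "\<not> d + 1 \<le> tz d y \<or> d + 1 > d" by simp
  have "tz d y = (LEAST i. odd (y div 2 ^ i))" using False by (simp add: tz_def)
  moreover have "odd (y div 2 ^ i) \<Longrightarrow> i < d" for i
  proof (rule ccontr)
    assume "odd (y div 2 ^ i)" "\<not> i < d"
    then have "(2::nat) ^ d \<le> 2 ^ i" by (intro power_increasing) auto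
    then have "y div 2 ^ i = 0" using assms by (intro div_less) linarith
    then show False using \<open>odd (y div 2 ^ i)\<close> by simp
  qed
  moreover have "\<exists>i. odd (y div 2 ^ i)" using False bit_eq_iff[of y 0] by (auto simp: bit_iff_odd)
  ultimately show ?thesis by (metis LeastI_ex less_imp_le)
qed

lemma card_tz_ge:
  assumes "s \<le> d"
  shows "card {y\<in>{..<2^d}. s \<le> tz d y} = 2 ^ (d - s)"
proof -
  have "{y\<in>{..<2^d}. s \<le> tz d y} = (\<lambda>z::nat. z * 2 ^ s) ` {..<2 ^ (d - s)}"
  proof (intro equalityI subsetI)
    fix y assume "y \<in> {y\<in>{..<2^d}. s \<le> tz d y}"
    then have y: "y < 2^d" "2 ^ s dvd y" using tz_ge_iff assms by auto
    then obtain z :: nat where z: "y = z * 2 ^ s" by (metis dvdE mult.commute)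
    have "z * 2 ^ s < 2 ^ (d - s) * 2 ^ s" using y z assms by (simp add: power_add[symmetric])
    then have "z < 2 ^ (d - s)" by simp
    then show "y \<in> (\<lambda>z::nat. z * 2 ^ s) ` {..<2 ^ (d - s)}" using z by auto
  next
    fix y :: nat assume "y \<in> (\<lambda>z::nat. z * 2 ^ s) ` {..<2 ^ (d - s)}"
    then obtain z where z: "z < 2 ^ (d - s)" "y = z * 2 ^ s" by auto
    then have "y < 2 ^ (d - s) * 2 ^ s" by simp
    also have "\<dots> = 2 ^ d" using assms by (simp add: power_add[symmetric])
    finally show "y \<in> {y\<in>{..<2^d}. s \<le> tz d y}" using z tz_ge_iff assms by auto
  qed
  moreover have "inj_on (\<lambda>z::nat. z * 2 ^ s) {..<2 ^ (d - s)}" by (auto simp: inj_on_def)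
  ultimately show ?thesis by (simp add: card_image)
qed

lemma card_mod_in:
  assumes "B \<subseteq> {..<2^c}" "c \<le> d"
  shows "card {y\<in>{..<(2::nat)^d}. y mod 2^c \<in> B} = card B * 2 ^ (d - c)"
proof -
  have eq: "{y\<in>{..<(2::nat)^d}. y mod 2^c \<in> B} = (\<lambda>(q, v). q * 2^c + v) ` ({..<2^(d-c)} \<times> B)"
  proof (intro equalityI subsetI)
    fix y assume "y \<in> {y\<in>{..<(2::nat)^d}. y mod 2^c \<in> B}"
    then have y: "y < 2^d" "y mod 2^c \<in> B" by auto
    have "y div 2^c < 2^(d-c)" using y assms
      by (simp add: div_less_iff_less_mult power_add[symmetric])
    moreover have "y = (y div 2^c) * 2^c + y mod 2^c" by (rule div_mult_mod_eq[symmetric])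
    ultimately show "y \<in> (\<lambda>(q, v). q * 2^c + v) ` ({..<2^(d-c)} \<times> B)" using y
      by (auto intro!: image_eqI[where x="(y div 2^c, y mod 2^c)"])
  next
    fix y assume "y \<in> (\<lambda>(q, v). q * 2^c + v) ` ({..<2^(d-c)} \<times> B)"
    then obtain q v where qv: "q < 2^(d-c)" "v \<in> B" "y = q * 2^c + v" by auto
    have v: "v < 2^c" using qv assms by auto
    then have "y mod 2^c = v" using qv by simp
    moreover have "y < 2^d"
    proof -
      have "y < q * 2^c + 2^c" using qv v by simp
      also have "\<dots> = (q + 1) * 2^c" by simp
      also have "\<dots> \<le> 2^(d-c) * 2^c" using qv by (intro mult_right_mono) auto
      also have "\<dots> = 2^d" using assms by (simp add: power_add[symmetric])
      finally show ?thesis .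
    qed
    ultimately show "y \<in> {y\<in>{..<(2::nat)^d}. y mod 2^c \<in> B}" using qv by auto
  qed
  have inj: "inj_on (\<lambda>(q, v). q * 2^c + v) ({..<2^(d-c)} \<times> (B::nat set))"
  proof (rule inj_onI, clarify)
    fix q v q' v' assume a: "v \<in> B" "v' \<in> B" "q * 2^c + v = q' * 2^c + v'"
    have "v < 2^c" "v' < 2^c" using a assms by auto
    then have "(q * 2^c + v) div 2^c = q" "(q' * 2^c + v') div 2^c = q'"
      "(q * 2^c + v) mod 2^c = v" "(q' * 2^c + v') mod 2^c = v'" by auto
    then show "q = q' \<and> v = v'" using a by metis
  qed
  show ?thesis unfolding eq using inj by (simp add: card_image card_cartesian_product)
qed

context
  fixes P :: "bit poly" and d :: nat
  assumes irr: "irreducible P" and dP: "degree P = d"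
begin

lemma G_single:
  assumes "x < 2^d" "s \<le> d"
  shows "pr (seeds d 2) (\<lambda>fa. s \<le> hash_G P d fa x) = 1 / 2^s"
proof -
  have "pr (seeds d 2) (\<lambda>fa. s \<le> hash_G P d fa x) =
        pr (seeds d 2) (\<lambda>fa. \<forall>i<1. gf_poly_eval P fa ([x] ! i) \<in> [{y\<in>{..<2^d}. s \<le> tz d y}] ! i)"
    by (intro pr_cong) (simp add: hash_G_def gf_eval_lt[OF irr dP])
  also have "\<dots> = (\<Prod>i<1. real (card ([{y\<in>{..<2^d}. s \<le> tz d y}] ! i)) / 2 ^ d)"
    by (rule hash_prob[OF irr dP]) (use assms in auto)
  also have "\<dots> = 2 ^ (d - s) / 2 ^ d" using card_tz_ge[OF assms(2)] by simp
  also have "\<dots> = 1 / 2 ^ s" using assms(2) by (simp add: power_diff)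
  finally show ?thesis .
qed

lemma G_pair:
  assumes "x < 2^d" "x' < 2^d" "x \<noteq> x'" "s \<le> d" "s' \<le> d"
  shows "pr (seeds d 2) (\<lambda>fa. s \<le> hash_G P d fa x \<and> s' \<le> hash_G P d fa x') = 1 / 2^s * (1 / 2^s')"
proof -
  have "pr (seeds d 2) (\<lambda>fa. s \<le> hash_G P d fa x \<and> s' \<le> hash_G P d fa x') =
        pr (seeds d 2) (\<lambda>fa. \<forall>i<2. gf_poly_eval P fa ([x, x'] ! i) \<in> [{y\<in>{..<2^d}. s \<le> tz d y}, {y\<in>{..<2^d}. s' \<le> tz d y}] ! i)"
    by (intro pr_cong) (auto simp: hash_G_def gf_eval_lt[OF irr dP] less_2_cases_iff)
  also have "\<dots> = (\<Prod>i<2. real (card ([{y\<in>{..<2^d}. s \<le> tz d y}, {y\<in>{..<2^d}. s' \<le> tz d y}] ! i)) / 2 ^ d)"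
    by (rule hash_prob[OF irr dP]) (use assms in auto)
  also have "\<dots> = 2 ^ (d - s) / 2 ^ d * (2 ^ (d - s') / 2 ^ d)"
    using card_tz_ge[OF assms(4)] card_tz_ge[OF assms(5)] by (simp add: numeral_2_eq_2)
  also have "\<dots> = 1 / 2 ^ s * (1 / 2 ^ s')" using assms by (simp add: power_diff)
  finally show ?thesis .
qed

lemma G_le: "hash_G P d fa x \<le> d"
  unfolding hash_G_def by (rule tz_le[OF gf_eval_lt[OF irr dP]])

lemma H_pair_eq:
  assumes "x < 2^d" "x' < 2^d" "x \<noteq> x'" "c \<le> d"
  shows "pr (seeds d 2) (\<lambda>ga. hash_H P c ga x = hash_H P c ga x') = 1 / 2^c"
proof -
  have "pr (seeds d 2) (\<lambda>ga. hash_H P c ga x = hash_H P c ga x') =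
        pr (seeds d 2) (\<lambda>ga. \<exists>v\<in>{..<2^c}. hash_H P c ga x = v \<and> hash_H P c ga x' = v)"
    by (intro pr_cong) (auto simp: hash_H_def)
  also have "\<dots> = (\<Sum>v\<in>{..<2^c}. pr (seeds d 2) (\<lambda>ga. hash_H P c ga x = v \<and> hash_H P c ga x' = v))"
    by (rule pr_exists_disjoint) (auto simp: finite_seeds)
  also have "\<dots> = (\<Sum>v\<in>{..<(2::nat)^c}. (1 / 2^c) * (1 / 2^c))"
  proof (intro sum.cong refl)
    fix v :: nat assume v: "v \<in> {..<2^c}"
    define Bv where "Bv = {y\<in>{..<(2::nat)^d}. y mod 2^c \<in> {v}}"
    have cB: "card Bv = 2 ^ (d - c)" unfolding Bv_def using card_mod_in[of "{v}" c d] v assms by simp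
    have "pr (seeds d 2) (\<lambda>ga. hash_H P c ga x = v \<and> hash_H P c ga x' = v) =
        pr (seeds d 2) (\<lambda>ga. \<forall>i<2. gf_poly_eval P ga ([x, x'] ! i) \<in> [Bv, Bv] ! i)"
      by (intro pr_cong) (auto simp: hash_H_def gf_eval_lt[OF irr dP] less_2_cases_iff Bv_def)
    also have "\<dots> = (\<Prod>i<2. real (card ([Bv, Bv] ! i)) / 2 ^ d)"
      by (rule hash_prob[OF irr dP]) (use assms in \<open>auto simp: Bv_def\<close>)
    also have "\<dots> = (2 ^ (d - c) / 2 ^ d) * (2 ^ (d - c) / 2 ^ d)"
      using cB by (simp add: numeral_2_eq_2)
    also have "\<dots> = (1 / 2^c) * (1 / 2^c)" using assms by (simp add: power_diff)
    finally show "pr (seeds d 2) (\<lambda>ga. hash_H P c ga x = v \<and> hash_H P c ga x' = v) = (1 / 2^c) * (1 / 2^c)" .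
  qed
  also have "\<dots> = 1 / 2^c" by (simp add: power2_eq_square)
  finally show ?thesis .
qed

lemma H_kwise:
  assumes "T \<subseteq> {..<2^d}" "card T \<le> k" "B \<subseteq> {..<2^c}" "c \<le> d"
  shows "pr (seeds d k) (\<lambda>ha. \<forall>x\<in>T. hash_H P c ha x \<in> B) = (real (card B) / 2^c) ^ card T"
proof -
  have finT: "finite T" using assms(1) finite_subset by blast
  define xs where "xs = sorted_list_of_set T"
  define Bh where "Bh = {y\<in>{..<(2::nat)^d}. y mod 2^c \<in> B}"
  have xs: "distinct xs" "set xs = T" "length xs = card T" using finT by (auto simp: xs_def)
  have cB: "card Bh = card B * 2 ^ (d - c)" unfolding Bh_def by (rule card_mod_in[OF assms(3,4)])
  have "pr (seeds d k) (\<lambda>ha. \<forall>x\<in>T. hash_H P c ha x \<in> B) =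
        pr (seeds d k) (\<lambda>ha. \<forall>i<card T. gf_poly_eval P ha (xs ! i) \<in> replicate (card T) Bh ! i)"
  proof (intro pr_cong)
    fix ha
    have "(\<forall>x\<in>T. hash_H P c ha x \<in> B) \<longleftrightarrow> (\<forall>x\<in>set xs. gf_poly_eval P ha x \<in> Bh)"
      using xs by (auto simp: hash_H_def Bh_def gf_eval_lt[OF irr dP])
    also have "\<dots> \<longleftrightarrow> (\<forall>i<length xs. gf_poly_eval P ha (xs ! i) \<in> Bh)"
      by (rule all_set_conv_all_nth)
    also have "\<dots> \<longleftrightarrow> (\<forall>i<card T. gf_poly_eval P ha (xs ! i) \<in> replicate (card T) Bh ! i)"
      using xs(3) by simp
    finally show "(\<forall>x\<in>T. hash_H P c ha x \<in> B) \<longleftrightarrow> \<dots>" .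
  qed
  also have "\<dots> = (\<Prod>i<card T. real (card (replicate (card T) Bh ! i)) / 2 ^ d)"
    by (rule hash_prob[OF irr dP]) (use xs assms in \<open>auto simp: Bh_def\<close>)
  also have "\<dots> = (\<Prod>i<card T. real (card B) * 2 ^ (d - c) / 2 ^ d)"
    using cB by simp
  also have "\<dots> = (real (card B) / 2^c) ^ card T"
    using assms(4) by (simp add: power_diff)
  finally show ?thesis .
qed

end


lemma nat_ceil_log2:
  fixes N :: nat assumes "N \<ge> 1"
  defines "L \<equiv> nat \<lceil>log 2 (real N)\<rceil>"
  shows "N \<le> 2 ^ L" "2 ^ L < 2 * N" "real_of_int \<lceil>log 2 (real N)\<rceil> = real L"
proof -
  have l0: "log 2 (real N) \<ge> 0" using assms by simp
  then have c0: "\<lceil>log 2 (real N)\<rceil> \<ge> 0" by simp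
  then show L: "real_of_int \<lceil>log 2 (real N)\<rceil> = real L" unfolding L_def by simp
  have "real N = 2 powr (log 2 (real N))" using assms by simp
  also have "\<dots> \<le> 2 powr (real L)" using L by (intro powr_mono) (auto simp flip: L)
  also have "\<dots> = 2 ^ L" by (simp add: powr_realpow)
  finally show "N \<le> 2 ^ L" by (metis of_nat_le_iff of_nat_numeral of_nat_power)
  have "(2::real) ^ L = 2 powr (real L)" by (simp add: powr_realpow)
  also have "\<dots> < 2 powr (log 2 (real N) + 1)" unfolding L[symmetric] by (intro powr_less_mono) linarith+
  also have "\<dots> = 2 * N" using assms by (simp add: powr_add)
  finally show "2 ^ L < 2 * N" by (metis of_nat_less_iff of_nat_mult of_nat_numeral of_nat_power)
qed

lemma b_exp_facts:
  fixes \<epsilon> :: real assumes "0 < \<epsilon>" "\<epsilon> < 1"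
  shows "b_exp \<epsilon> \<ge> 27" "\<epsilon>^2 * real (b_of \<epsilon>) \<ge> 9 * 2^23"
proof -
  define r where "r = 9 * 2^23 / \<epsilon>^2"
  have r: "r \<ge> 9 * 2^23" unfolding r_def using assms
    by (simp add: field_simps) (metis less_eq_real_def mult_le_cancel_left1 power_le_one power_less_one_iff zero_less_numeral zero_less_power mult_le_one)
  have l26: "log 2 ((2::real)^26) = 26" using log_pow_cancel[of "2::real" 26] by simp
  have "log 2 r > 26"
  proof -
    have "log 2 r \<ge> log 2 (9 * 2^23)" using r by (subst log_le_cancel_iff) auto
    moreover have "log 2 (9 * 2^23) > log 2 ((2::real)^26)" by (subst log_less_cancel_iff) auto
    ultimately show ?thesis unfolding l26 by simp
  qed
  then have "\<lceil>log 2 r\<rceil> \<ge> 27" by linarith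
  then show "b_exp \<epsilon> \<ge> 27" unfolding b_exp_def r_def by linarith
  have "r = 2 powr (log 2 r)" using r by simp
  also have "\<dots> \<le> 2 powr (real (b_exp \<epsilon>))"
  proof (intro powr_mono)
    have "log 2 r \<le> real_of_int \<lceil>log 2 r\<rceil>" by simp
    also have "\<dots> = real (nat \<lceil>log 2 r\<rceil>)" using \<open>\<lceil>log 2 r\<rceil> \<ge> 27\<close> by simp
    finally show "log 2 r \<le> real (b_exp \<epsilon>)" unfolding b_exp_def r_def .
  qed simp
  also have "\<dots> = real (b_of \<epsilon>)" by (simp add: b_of_def powr_realpow)
  finally show "\<epsilon>^2 * real (b_of \<epsilon>) \<ge> 9 * 2^23" unfolding r_def using assms by (simp add: field_simps)
qed

lemma k_of_ge:
  fixes \<epsilon> :: real assumes "0 < \<epsilon>" "\<epsilon> < 1"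
  shows "real (k_of \<epsilon>) \<ge> 4 * b_exp \<epsilon>"
proof -
  have "ln (real (b_of \<epsilon>)) = real (b_exp \<epsilon>) * ln 2"
    by (simp add: b_of_def ln_realpow)
  moreover have "ln (2::real) \<ge> 2/3" by (rule ln2_ge_two_thirds)
  moreover have "real (b_exp \<epsilon>) * ln 2 \<ge> real (b_exp \<epsilon>) * (2/3)"
    using ln2_ge_two_thirds by (intro mult_left_mono) auto
  ultimately have "15 / 2 * ln (real (b_of \<epsilon>)) \<ge> 15/2 * (real (b_exp \<epsilon>) * (2/3))"
    by simp
  then have "15 / 2 * ln (real (b_of \<epsilon>)) + 16 \<ge> 4 * b_exp \<epsilon>" by simp
  then show ?thesis unfolding k_of_def by linarith
qed


lemma abs_ln_bound:
  fixes w :: real assumes "w > 0"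
  shows "\<bar>ln w\<bar> \<le> max (w - 1) ((1 - w) / w)"
proof (cases "w \<ge> 1")
  case True
  then have "0 \<le> ln w" "ln w \<le> w - 1" using assms by (auto intro: ln_le_minus_one)
  then show ?thesis by simp
next
  case False
  have "ln w < 0" using False assms by (intro ln_less_zero) auto
  moreover have "ln (1/w) \<le> 1/w - 1" using assms by (intro ln_le_minus_one) auto
  moreover have "ln (1/w) = - ln w" using assms by (simp add: ln_div)
  moreover have "1/w - 1 = (1 - w)/w" using assms by (simp add: field_simps)
  ultimately show ?thesis by simp
qed

lemma accuracy:
  fixes bn z :: nat and N \<mu> p \<epsilon> s2 :: real
  defines "b \<equiv> real bn" and "Z \<equiv> real z"
  assumes b: "b \<ge> 8" and eps: "0 < \<epsilon>" "\<epsilon> \<le> 1" and N: "N > 0" and s2: "s2 > 0"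
    and \<mu>: "\<mu> = N / s2" "\<mu> \<le> b/8"
    and Z\<mu>: "\<bar>Z - \<mu>\<bar> \<le> \<epsilon>/3 * \<mu>"
    and pZ: "\<bar>p - b * (1 - (1 - 1/b)^z)\<bar> \<le> \<epsilon>/3 * Z"
  shows "p < b" "\<bar>s2 * rho_inv bn p - N\<bar> \<le> \<epsilon> * N"
proof -
  have \<mu>0: "\<mu> > 0" using \<mu> N s2 by simp
  have emu: "\<epsilon> * \<mu> \<le> 1 * \<mu>" using eps \<mu>0 by (intro mult_right_mono) auto
  have Zup: "Z \<le> 4/3 * \<mu>" using Z\<mu> emu abs_ge_self[of "Z - \<mu>"] by linarith
  have Zb: "Z \<le> b / 6" using Zup \<mu>(2) by linarith
  define u where "u = (1 - 1/b)^z"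
  have ub: "1 + real z * (- (1/b)) \<le> (1 + - (1/b))^z" using b by (intro Bernoulli_inequality) auto
  then have ub': "1 - Z/b \<le> u" unfolding u_def Z_def by simp
  have "Z/b \<le> 1/6" using Zb b by (simp add: divide_le_eq)
  then have u56: "u \<ge> 5/6" using ub' by linarith
  have u1: "u \<le> 1" unfolding u_def using b by (intro power_le_one) auto
  define \<rho> where "\<rho> = b * (1 - u)"
  have \<rho>Z: "\<rho> \<le> Z"
  proof -
    have "b * (1 - u) \<le> b * (Z/b)" using ub' b by (intro mult_left_mono) auto
    then show ?thesis unfolding \<rho>_def using b by simp
  qed
  have eZ: "\<epsilon> * Z \<le> 1 * Z" using eps unfolding Z_def by (intro mult_right_mono) auto
  have pup: "p \<le> \<rho> + Z / 3" using pZ eZ abs_ge_self[of "p - \<rho>"] unfolding \<rho>_def u_def by linarith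
  have p29: "p \<le> 2/9 * b" using pup \<rho>Z Zb by linarith
  then show pb: "p < b" using b by linarith
  have omp: "1 - p / b \<ge> 7/9" using p29 b by (simp add: field_simps)
  define lb where "lb = ln (1 - 1/b)"
  have lbneg: "lb \<le> - (1/b)" unfolding lb_def using ln_le_minus_one[of "1 - 1/b"] b by simp
  have lb0: "lb < 0" using lbneg b by (smt (verit) divide_pos_pos)
  have lnu: "ln u = Z * lb" unfolding u_def lb_def Z_def by (simp add: ln_realpow)
  define w where "w = (1 - p/b) / u"
  have w0: "w > 0" unfolding w_def using omp u56 by (intro divide_pos_pos) linarith+
  have rho_eq: "rho_inv bn p = ln w / lb + Z"
  proof -
    have wu: "1 - p/b = w * u" unfolding w_def using u56 by simp
    have "ln (1 - p/b) = ln w + ln u" unfolding wu using w0 u56 by (simp add: ln_mult)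
    then have "rho_inv bn p = (ln w + Z * lb) / lb" unfolding rho_inv_def lb_def b_def lnu by simp
    then show ?thesis using lb0 by (simp add: field_simps)
  qed
  have w1: "w - 1 = (\<rho> - p) / (b * u)" unfolding w_def \<rho>_def using u56 b by (simp add: field_simps)
  have "\<bar>rho_inv bn p - Z\<bar> = \<bar>ln w\<bar> / \<bar>lb\<bar>" unfolding rho_eq by (simp add: abs_divide)
  also have "\<dots> \<le> \<bar>ln w\<bar> * b"
  proof -
    have "1 / \<bar>lb\<bar> \<le> b" using lbneg lb0 b by (simp add: field_simps)
    then show ?thesis by (metis abs_ge_zero divide_le_eq_1 mult.commute mult_left_mono times_divide_eq_right mult_1_right)
  qed
  also have "\<dots> \<le> 9/7 * \<bar>\<rho> - p\<bar>"
  proof -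
    have "\<bar>ln w\<bar> \<le> max (w - 1) ((1 - w) / w)" by (rule abs_ln_bound[OF w0])
    moreover have X1: "(w - 1) * b \<le> 9/7 * \<bar>\<rho> - p\<bar>"
    proof -
      have "(w - 1) * b = (\<rho> - p) / u" unfolding w1 using b u56 by (simp add: field_simps)
      also have "\<dots> \<le> \<bar>\<rho> - p\<bar> / u" using u56 by (intro divide_right_mono) auto
      also have "\<dots> \<le> \<bar>\<rho> - p\<bar> / (5/6)" using u56 by (intro divide_left_mono) auto
      also have "\<dots> \<le> 9/7 * \<bar>\<rho> - p\<bar>" using abs_ge_zero[of "\<rho> - p"] by simp
      finally show ?thesis .
    qed
    moreover have X2: "((1 - w) / w) * b \<le> 9/7 * \<bar>\<rho> - p\<bar>"
    proof -
      have "1 - w = - ((\<rho> - p) / (b * u))" using w1 by simp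
      also have "\<dots> = (p - \<rho>) / (b * u)" by (simp add: minus_divide_left)
      finally have "1 - w = (p - \<rho>) / (b * u)" .
      then have "((1 - w) / w) * b = ((p - \<rho>) / (b * u)) / w * b" by simp
      also have "\<dots> = (p - \<rho>) / (u * w)" using w0 u56 b by (simp add: field_simps)
      finally have "((1 - w) / w) * b = (p - \<rho>) / (u * w)" .
      also have "u * w = 1 - p/b" unfolding w_def using u56 by simp
      also have "(p - \<rho>) / (1 - p/b) \<le> \<bar>\<rho> - p\<bar> / (1 - p/b)"
      proof (rule divide_right_mono)
        show "p - \<rho> \<le> \<bar>\<rho> - p\<bar>" by simp
        show "0 \<le> 1 - p/b" using omp by linarith
      qed
      also have "\<dots> \<le> \<bar>\<rho> - p\<bar> / (7/9)"
      proof (rule divide_left_mono)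
        show "7/9 \<le> 1 - p/b" by (rule omp)
        show "0 \<le> \<bar>\<rho> - p\<bar>" by simp
        show "0 < (1 - p/b) * (7/9)" using omp by (intro mult_pos_pos) linarith+
      qed
      finally show ?thesis by simp
    qed
    ultimately have "\<bar>ln w\<bar> * b \<le> max (w - 1) ((1 - w) / w) * b" using b by (intro mult_right_mono) auto
    also have "\<dots> \<le> 9/7 * \<bar>\<rho> - p\<bar>" using X1 X2 by (cases "w - 1 \<le> (1 - w) / w") (simp_all add: max_def)
    finally show ?thesis .
  qed
  also have "\<dots> \<le> 9/7 * (\<epsilon>/3 * Z)" using pZ unfolding \<rho>_def u_def by (simp add: abs_minus_commute mult.commute)
  finally have rZ: "\<bar>rho_inv bn p - Z\<bar> \<le> 9/7 * (\<epsilon>/3 * Z)" .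
  have "\<bar>s2 * rho_inv bn p - N\<bar> = \<bar>s2 * (rho_inv bn p - Z) + s2 * (Z - \<mu>)\<bar>"
    using \<mu> s2 by (simp add: algebra_simps)
  also have "\<dots> \<le> s2 * \<bar>rho_inv bn p - Z\<bar> + s2 * \<bar>Z - \<mu>\<bar>"
    using s2 by (simp add: abs_mult abs_triangle_ineq[THEN order_trans])
  also have "\<dots> \<le> s2 * (9/7 * (\<epsilon>/3 * (4/3 * \<mu>))) + s2 * (\<epsilon>/3 * \<mu>)"
  proof (intro add_mono mult_left_mono)
    show "\<bar>rho_inv bn p - Z\<bar> \<le> 9/7 * (\<epsilon>/3 * (4/3 * \<mu>))"
      using rZ Zup eps by (smt (verit) mult_left_mono divide_nonneg_nonneg)
  qed (use Z\<mu> s2 in auto)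
  also have "\<dots> = (19/21) * \<epsilon> * N" using \<mu> s2 by (simp add: field_simps)
  also have "\<dots> \<le> \<epsilon> * N" using eps N by simp
  finally show "\<bar>s2 * rho_inv bn p - N\<bar> \<le> \<epsilon> * N" .
qed


lemma tau1_q: "tau1 A f g h q j + q = max (tau0 A f g h j) (q - 1)"
  unfolding tau1_def by linarith

lemma tau0_le:
  assumes "finite A" "A \<noteq> {}"
  shows "tau0 A f g h j \<le> int (Max (f ` A))"
  unfolding tau0_def
proof (subst Max_le_iff)
  show "finite ({int (f a) |a. a \<in> A \<and> h (g a) = j} \<union> {- 1})" using assms by auto
  show "\<forall>x\<in>{int (f a) |a. a \<in> A \<and> h (g a) = j} \<union> {- 1}. x \<le> int (Max (f ` A))"
    using assms by auto
qed simp

lemma tau0_ge: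
  assumes "finite A" "a \<in> A"
  shows "int (f a) \<le> tau0 A f g h (h (g a))"
  unfolding tau0_def using assms by (intro Max_ge) auto

lemma tau0_ge_iff:
  assumes "finite A" "(s::int) \<ge> 0"
  shows "s \<le> tau0 A f g h j \<longleftrightarrow> (\<exists>a\<in>A. h (g a) = j \<and> s \<le> int (f a))"
  unfolding tau0_def using assms by (subst Max_ge_iff) auto

lemma tau_max:
  assumes "finite A" "A \<noteq> {}" "\<forall>a\<in>A. h (g a) < b"
  shows "Max ((\<lambda>j. tau1 A f g h q j + q) ` {..<b}) = max (int (Max (f ` A))) (q - 1)"
proof (rule Max_eqI)
  show "finite ((\<lambda>j. tau1 A f g h q j + q) ` {..<b})" by simp
  show "y \<le> max (int (Max (f ` A))) (q - 1)" if yin: "y \<in> (\<lambda>j. tau1 A f g h q j + q) ` {..<b}" for y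
  proof -
    obtain j where "y = max (tau0 A f g h j) (q - 1)" using yin by (auto simp: tau1_q)
    moreover have "tau0 A f g h j \<le> int (Max (f ` A))" by (rule tau0_le[OF assms(1,2)])
    ultimately show ?thesis by linarith
  qed
  have "Max (f ` A) \<in> f ` A" using assms by (intro Max_in) auto
  then obtain a0 where a0: "a0 \<in> A" "f a0 = Max (f ` A)" by auto
  have "tau0 A f g h (h (g a0)) = int (Max (f ` A))"
    using tau0_le[OF assms(1,2), of f g h "h (g a0)"] tau0_ge[OF assms(1) a0(1), of f g h] a0(2) by linarith
  then show "max (int (Max (f ` A))) (q - 1) \<in> (\<lambda>j. tau1 A f g h q j + q) ` {..<b}"
    using assms a0 by (auto simp: tau1_q intro!: image_eqI[where x="h (g a0)"])
qed

lemma tau_count: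
  assumes "finite A" "\<forall>a\<in>A. h (g a) < b" "q - 1 < int s"
  shows "{j \<in> {..<b}. real_of_int (tau1 A f g h q j + q) \<ge> real s} = h ` g ` {a\<in>A. s \<le> f a}"
proof -
  have "real_of_int (tau1 A f g h q j + q) \<ge> real s \<longleftrightarrow> int s \<le> tau0 A f g h j" for j
    using assms(3) by (simp add: tau1_q) linarith
  also have "\<dots> j \<longleftrightarrow> (\<exists>a\<in>A. h (g a) = j \<and> int s \<le> int (f a))" for j
    using assms(1) by (intro tau0_ge_iff) auto
  finally show ?thesis using assms(2) by auto
qed

lemma det_Y:
  fixes A :: "nat set" and f g h :: "nat \<Rightarrow> nat" and bn \<beta> L s p :: nat and \<epsilon> :: real and q :: int
  assumes finA: "finite A" "A \<noteq> {}"
    and hb: "\<forall>a\<in>A. h (g a) < bn" and bn: "bn = 2^\<beta>" and \<beta>: "\<beta> \<ge> 27"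
    and Llog: "\<lceil>log 2 (real (card A))\<rceil> = int L"
    and Mlo: "int (Max (f ` A)) \<ge> int L - 6"
    and s: "s = nat (int (Max (f ` A)) - int \<beta> + 9)"
    and p: "p = card (h ` g ` {a\<in>A. s \<le> f a})"
    and acc: "p < bn" "\<bar>2^s * rho_inv bn (real p) - real (card A)\<bar> \<le> \<epsilon> * card A"
    and q: "0 \<le> q" "q \<le> q_max bn A"
  shows "\<not> (\<bar>Y_c bn A f g h q - ereal (real (card A))\<bar> > ereal (\<epsilon> * real (card A)))"
proof -
  define M where "M = Max (f ` A)"
  have lb: "log 2 (real bn) = real \<beta>" unfolding bn by simp
  have flb: "\<lfloor>log 2 (real bn)\<rfloor> = int \<beta>" unfolding lb by simp
  have qm: "q_max bn A = max 0 (int L - int \<beta>)" unfolding q_max_def Llog flb by simp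
  have q1: "q - 1 \<le> int M" using q qm Mlo \<beta> unfolding M_def by linarith
  have qs: "q - 1 < int s" using q qm Mlo \<beta> unfolding s M_def by linarith
  have mx: "Max ((\<lambda>j. tau1 A f g h q j + q) ` {..<bn}) = int M"
    unfolding tau_max[where h=h and g=g, OF finA hb] M_def using q1 unfolding M_def by simp
  have tc: "t_c bn A f g h q = real M - real \<beta> + 9" unfolding t_c_def mx lb by simp
  have sc: "s_c bn A f g h q = real s" unfolding s_c_def tc s M_def by simp
  have pc: "p_c bn A f g h q = p" unfolding p_c_def sc p using tau_count[where h=h and g=g and f=f, OF finA(1) hb qs] by simp
  have Y: "Y_c bn A f g h q = ereal (2 ^ s * rho_inv bn (real p))"
    unfolding Y_c_def pc sc using acc(1) by (simp add: powr_realpow)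
  show ?thesis unfolding Y using acc(2) by simp
qed


locale setting =
  fixes n :: nat and \<epsilon> :: real and A :: "nat set"
    and Pf Pg Ph :: "bit poly" and df dg dh :: nat
  assumes n1: "n \<ge> 1" and eps0: "0 < \<epsilon>" and eps1: "\<epsilon> < 1"
    and A_sub: "A \<subseteq> {..<n}" and A_ne: "A \<noteq> {}"
    and Pf_irr: "irreducible Pf" and Pf_deg: "degree Pf = df" and Pf_n: "2 ^ df \<ge> n"
    and Pg_irr: "irreducible Pg" and Pg_deg: "degree Pg = dg" and Pg_n: "2 ^ dg \<ge> n"
    and Pg_c: "dg \<ge> 5 + 2 * b_exp \<epsilon>"
    and Ph_irr: "irreducible Ph" and Ph_deg: "degree Ph = dh" and Ph_b: "2 ^ dh \<ge> 2 ^ 5 * b_of \<epsilon> ^ 2"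
    and Ph_be: "dh \<ge> b_exp \<epsilon>"
begin

abbreviation "\<beta> \<equiv> b_exp \<epsilon>"
abbreviation "bn \<equiv> b_of \<epsilon>"
abbreviation "kk \<equiv> k_of \<epsilon>"
abbreviation "cc \<equiv> 5 + 2 * \<beta>"
abbreviation "Fs \<equiv> seeds df 2"
abbreviation "Gs \<equiv> seeds dg 2"
abbreviation "Hs \<equiv> seeds dh kk"
abbreviation "ff fa \<equiv> hash_G Pf df fa"
abbreviation "gg ga \<equiv> hash_H Pg cc ga"
abbreviation "hh ha \<equiv> hash_H Ph \<beta> ha"
abbreviation "NN \<equiv> card A"
abbreviation "L \<equiv> nat \<lceil>log 2 (real NN)\<rceil>"
abbreviation "X fa s \<equiv> {a\<in>A. s \<le> ff fa a}"

lemma finA: "finite A" using A_sub finite_subset by blast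

lemma N1: "NN \<ge> 1" using finA A_ne by (simp add: Suc_le_eq card_gt_0_iff)

lemma NL: "NN \<le> 2 ^ L" "2 ^ L < 2 * NN" "real_of_int \<lceil>log 2 (real NN)\<rceil> = real L"
  using nat_ceil_log2[OF N1] by auto

lemma N_le_n: "NN \<le> n" using A_sub by (metis card_lessThan card_mono finite_lessThan)

lemma L_df: "L \<le> df"
proof -
  have "(2::nat) ^ L < 2 * 2 ^ df" using NL N_le_n Pf_n by linarith
  then have "2 ^ L < (2::nat) ^ Suc df" by simp
  then have "L < Suc df" by (rule power_less_imp_less_exp[rotated]) simp
  then show ?thesis by (simp only: less_Suc_eq_le)
qed

lemma A_f: "A \<subseteq> {..<2^df}" using A_sub Pf_n by auto
lemma A_g: "A \<subseteq> {..<2^dg}" using A_sub Pg_n by auto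

lemma beta27: "\<beta> \<ge> 27" using b_exp_facts[OF eps0 eps1] by simp
lemma eps_b: "\<epsilon>^2 * real bn \<ge> 9 * 2^23" using b_exp_facts[OF eps0 eps1] by simp
lemma bn_def': "bn = 2 ^ \<beta>" by (simp add: b_of_def)
lemma kk_ge: "real kk \<ge> 4 * \<beta>" using k_of_ge[OF eps0 eps1] by simp

lemma dh_c: "cc \<le> dh"
proof -
  have "(2::nat) ^ cc = 2 ^ 5 * bn ^ 2" by (simp add: bn_def' power_add power_mult[symmetric] ac_simps)
  then have "(2::nat) ^ cc \<le> 2 ^ dh" using Ph_b by simp
  then show ?thesis by simp
qed

lemma finFs: "finite Fs" "Fs \<noteq> {}" by (auto simp: finite_seeds seeds_nonempty)
lemma finGs: "finite Gs" "Gs \<noteq> {}" by (auto simp: finite_seeds seeds_nonempty)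
lemma finHs: "finite Hs" "Hs \<noteq> {}" by (auto simp: finite_seeds seeds_nonempty)

lemma f_single: "a \<in> A \<Longrightarrow> s \<le> df \<Longrightarrow> pr Fs (\<lambda>fa. s \<le> ff fa a) = 1 / 2^s"
  using G_single[OF Pf_irr Pf_deg] A_f by auto

lemma f_single_le: assumes "a \<in> A" shows "pr Fs (\<lambda>fa. s \<le> ff fa a) \<le> 1 / 2^s"
proof (cases "s \<le> df")
  case True then show ?thesis using f_single assms by simp
next
  case False
  have "pr Fs (\<lambda>fa. s \<le> ff fa a) = pr Fs (\<lambda>fa. False)"
  proof (intro pr_cong)
    fix fa
    have "ff fa a \<le> df" by (rule G_le[OF Pf_irr Pf_deg])
    then show "(s \<le> ff fa a) = False" using False by simp
  qed
  then show ?thesis by (simp add: pr_false)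
qed

lemma f_pair: assumes "a \<in> A" "a' \<in> A" "s \<le> df"
  shows "pr Fs (\<lambda>fa. s \<le> ff fa a \<and> s \<le> ff fa a') = (if a = a' then 1 / 2^s else 1/2^s * (1/2^s))"
proof (cases "a = a'")
  case True then show ?thesis using f_single[OF assms(1,3)] by simp
next
  case False
  have "a < 2^df" "a' < 2^df" using assms A_f by auto
  then show ?thesis using G_pair[OF Pf_irr Pf_deg, of a a' s s] False assms(3) by simp
qed

lemma var_X:
  assumes "s \<le> df"
  shows "ex Fs (\<lambda>fa. (real (card (X fa s)) - NN / 2^s)^2) = NN * (1/2^s) * (1 - 1/2^s)"
proof -
  define p :: real where "p = 1/2^s"
  define I where "I = (\<lambda>a fa. of_bool (s \<le> ff fa a) :: real)"
  have cX: "real (card (X fa s)) = (\<Sum>a\<in>A. I a fa)" for fa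
    unfolding I_def by (rule card_filter_sum[OF finA])
  have exI: "ex Fs (I a) = p" if "a \<in> A" for a
    unfolding I_def p_def using f_single[OF that assms] by (simp add: pr_ex[OF finFs(1)])
  have exII: "ex Fs (\<lambda>fa. I a fa * I a' fa) = (if a = a' then p else p * p)" if "a \<in> A" "a' \<in> A" for a a'
  proof -
    have "ex Fs (\<lambda>fa. I a fa * I a' fa) = pr Fs (\<lambda>fa. s \<le> ff fa a \<and> s \<le> ff fa a')"
      unfolding I_def pr_ex[OF finFs(1)] by (intro ex_cong) auto
    then show ?thesis using f_pair[OF that assms] unfolding p_def by simp
  qed
  have "ex Fs (\<lambda>fa. (real (card (X fa s)) - NN / 2^s)^2) =
        ex Fs (\<lambda>fa. \<Sum>a\<in>A. \<Sum>a'\<in>A. (I a fa - p) * (I a' fa - p))"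
  proof (intro ex_cong)
    fix fa
    have "real (card (X fa s)) - NN / 2^s = (\<Sum>a\<in>A. I a fa - p)"
      unfolding cX p_def by (simp add: sum_subtractf)
    then show "(real (card (X fa s)) - NN / 2^s)^2 = (\<Sum>a\<in>A. \<Sum>a'\<in>A. (I a fa - p) * (I a' fa - p))"
      by (simp add: power2_eq_square sum_product)
  qed
  also have "\<dots> = (\<Sum>a\<in>A. \<Sum>a'\<in>A. ex Fs (\<lambda>fa. (I a fa - p) * (I a' fa - p)))"
    by (simp add: ex_sum)
  also have "\<dots> = (\<Sum>a\<in>A. \<Sum>a'\<in>A. (if a = a' then p - p * p else 0))"
  proof (intro sum.cong refl)
    fix a a' assume a: "a \<in> A" "a' \<in> A"
    have "ex Fs (\<lambda>fa. (I a fa - p) * (I a' fa - p)) =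
          ex Fs (\<lambda>fa. I a fa * I a' fa) - p * ex Fs (I a) - p * ex Fs (I a') + p * p"
    proof -
      have "ex Fs (\<lambda>fa. (I a fa - p) * (I a' fa - p)) = ex Fs (\<lambda>fa. I a fa * I a' fa - p * I a fa - p * I a' fa + p * p)"
        by (intro ex_cong) (simp add: algebra_simps)
      also have "\<dots> = ex Fs (\<lambda>fa. I a fa * I a' fa) - p * ex Fs (I a) - p * ex Fs (I a') + p * p"
        using finFs by (simp add: ex_add ex_diff ex_cmult ex_const)
      finally show ?thesis .
    qed
    then show "ex Fs (\<lambda>fa. (I a fa - p) * (I a' fa - p)) = (if a = a' then p - p * p else 0)"
      using exI[OF a(1)] exI[OF a(2)] exII[OF a] by auto
  qed
  also have "\<dots> = (\<Sum>a\<in>A. p - p * p)"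
    using finA by (simp add: sum.delta)
  also have "\<dots> = NN * p * (1 - p)" by (simp add: algebra_simps)
  finally show ?thesis unfolding p_def .
qed

end


lemma arith_E3:
  fixes b K \<epsilon> Z :: real
  assumes b: "b \<ge> 2" and K: "K \<ge> b^4" and eps: "0 < \<epsilon>" and eb: "\<epsilon>^2 * b \<ge> 9 * 2^23" and Z: "Z \<ge> 1"
  shows "\<epsilon>/3 * Z > b / K" "(Z^2 / b + 3 * b^2 / K) / (\<epsilon>/3 * Z - b / K)^2 \<le> 1 / 2^19"
proof -
  have K0: "K > 0" using K b by (smt (verit) zero_less_power)
  have bK: "b / K \<le> 1 / b^3"
  proof -
    have "b / K \<le> b / b^4" using K b K0 by (intro divide_left_mono) auto
    also have "\<dots> = 1 / b^3" using b by (simp add: power_eq_if field_simps)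
    finally show ?thesis .
  qed
  have e6: "\<epsilon> / 6 \<ge> 1 / b^3"
  proof -
    have "(1 / b^3)^2 = 1 / b^6" by (simp add: power_mult[symmetric] power_one_over)
    also have "\<dots> \<le> 1 / b" using b by (intro divide_left_mono) (auto intro: power_increasing[of 1 6 b, simplified])
    also have "\<dots> \<le> 2^21 / b" using b by (intro divide_right_mono) auto
    also have "\<dots> \<le> (\<epsilon>/6)^2" using eb b by (simp add: field_simps power2_eq_square)
    finally have "(1 / b^3)^2 \<le> (\<epsilon>/6)^2" .
    moreover have "0 \<le> \<epsilon> / 6" using eps by simp
    ultimately show ?thesis by (rule power2_le_imp_le)
  qed
  have eZ: "\<epsilon> / 6 \<le> \<epsilon> / 6 * Z" using eps Z by simp
  have low: "\<epsilon>/3 * Z - b / K \<ge> \<epsilon>/6 * Z" using bK e6 eZ by linarith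
  have pos6: "\<epsilon>/6 * Z > 0" using eps Z by simp
  then show "\<epsilon>/3 * Z > b / K" using low by linarith
  have num: "Z^2 / b + 3 * b^2 / K \<le> 4 * Z^2 / b"
  proof -
    have "3 * b^2 / K \<le> 3 * b^2 / b^4" using K b K0 by (intro divide_left_mono) auto
    also have "\<dots> = 3 / b^2" using b by (simp add: power_eq_if field_simps)
    also have "\<dots> \<le> 3 / b" using b by (intro divide_left_mono) (auto simp: power2_eq_square)
    also have "\<dots> \<le> 3 * Z^2 / b" using b Z by (intro divide_right_mono) (auto simp: one_le_power)
    finally show ?thesis by (simp add: add_divide_distrib[symmetric])
  qed
  have "(Z^2 / b + 3 * b^2 / K) / (\<epsilon>/3 * Z - b / K)^2 \<le> (4 * Z^2 / b) / (\<epsilon>/6 * Z)^2"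
    using num low pos6 b by (intro frac_le power_mono) auto
  also have "\<dots> = 144 / (\<epsilon>^2 * b)" using Z b eps by (simp add: field_simps power2_eq_square)
  also have "\<dots> \<le> 144 / (9 * 2^23)" using eb eps b by (intro divide_left_mono) auto
  also have "\<dots> = 1 / 2^19" by simp
  finally show "(Z^2 / b + 3 * b^2 / K) / (\<epsilon>/3 * Z - b / K)^2 \<le> 1 / 2^19" .
qed

lemma sum_pow2_minus1: "(\<Sum>s<Suc S. (2::real)^s - 1) \<le> 2^(S+1) - 2"
proof (induction S)
  case 0 then show ?case by simp
next
  case (Suc S)
  have "(\<Sum>s<Suc (Suc S). (2::real)^s - 1) = (\<Sum>s<Suc S. (2::real)^s - 1) + (2^Suc S - 1)" by simp
  also have "\<dots> \<le> 2^(S+1) - 2 + (2^Suc S - 1)" using Suc by simp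
  also have "\<dots> \<le> 2^(Suc S + 1) - 2" by simp
  finally show ?case .
qed

context setting
begin

definition LL :: nat where "LL = L"

lemma NLr: "real NN \<le> 2 ^ LL" "(2::real) ^ LL < 2 * NN" "\<lceil>log 2 (real NN)\<rceil> = int LL" "LL \<le> df"
proof -
  show "real NN \<le> 2 ^ LL" unfolding LL_def using NL(1) by (metis of_nat_le_iff of_nat_numeral of_nat_power)
  show "(2::real) ^ LL < 2 * NN" unfolding LL_def using NL(2) by (metis of_nat_less_iff of_nat_mult of_nat_numeral of_nat_power)
  show "\<lceil>log 2 (real NN)\<rceil> = int LL" unfolding LL_def using NL(3) by linarith
  show "LL \<le> df" unfolding LL_def by (rule L_df)
qed

abbreviation "rr \<equiv> int LL + 9 - int \<beta>"
abbreviation "s_lo \<equiv> nat (rr - 6)"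
abbreviation "s_hi \<equiv> nat (rr + 6)"
abbreviation "MM fa \<equiv> Max (ff fa ` A)"
abbreviation "E1 fa s \<equiv> \<bar>real (card (X fa s)) - NN / 2^s\<bar> > \<epsilon>/3 * (NN / 2^s)"
abbreviation "rho z \<equiv> real bn * (1 - (1 - 1 / real bn) ^ z)"
abbreviation "E3 fa ga ha s \<equiv> inj_on (gg ga) (X fa s) \<and> \<not> E1 fa s \<and>
   \<bar>real (card (hh ha ` gg ga ` X fa s)) - rho (card (X fa s))\<bar> > \<epsilon>/3 * real (card (X fa s))"

lemma bn_real: "real bn = 2 ^ \<beta>" by (simp add: bn_def')
lemma bn_pos: "bn > 0" by (simp add: bn_def')

lemma mu_bound:
  assumes "s_lo \<le> s" shows "real NN / 2^s \<le> real bn / 8"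
proof -
  have "LL + 3 \<le> s + \<beta>" using assms by linarith
  then have "(2::real) ^ (LL + 3) \<le> 2 ^ (s + \<beta>)" by (intro power_increasing) auto
  moreover have "8 * real NN \<le> 2 ^ (LL + 3)"
    using NLr(1) by (simp add: power_add)
  moreover have "(2::real) ^ (s + \<beta>) = 2 ^ s * real bn" by (simp add: power_add bn_real)
  ultimately have "8 * real NN \<le> 2 ^ s * real bn" by linarith
  then show ?thesis by (simp add: field_simps)
qed

lemma s_hi_df: "s_hi \<le> df" using NLr(4) beta27 by linarith

lemma card_window: "card {s_lo..s_hi} \<le> 13" by simp

lemma cheb_X:
  assumes "s \<le> df" "t > 0"
  shows "pr Fs (\<lambda>fa. \<bar>real (card (X fa s)) - NN / 2^s\<bar> \<ge> t) \<le> NN * (1/2^s) * (1 - 1/2^s) / t^2"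
  using chebyshev[OF finFs(1) assms(2), of "\<lambda>fa. real (card (X fa s))" "NN / 2^s"] var_X[OF assms(1)]
  by simp

lemma B1: "pr Fs (\<lambda>fa. int (MM fa) < int LL - 6) \<le> 1/32"
proof (cases "LL \<le> 6")
  case True
  then have "pr Fs (\<lambda>fa. int (MM fa) < int LL - 6) = pr Fs (\<lambda>fa. False)" by (intro pr_cong) auto
  then show ?thesis by (simp add: pr_false)
next
  case False
  define t where "t = LL - 6"
  have tdf: "t \<le> df" using NLr(4) unfolding t_def by simp
  define \<mu> where "\<mu> = real NN / 2^t"
  have \<mu>0: "\<mu> > 0" unfolding \<mu>_def using N1 by simp
  have "pr Fs (\<lambda>fa. int (MM fa) < int LL - 6) \<le> pr Fs (\<lambda>fa. \<bar>real (card (X fa t)) - NN / 2^t\<bar> \<ge> \<mu>)"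
  proof (rule pr_mono[OF finFs(1)])
    fix fa assume "int (MM fa) < int LL - 6"
    then have "MM fa < t" unfolding t_def using False by linarith
    moreover have "ff fa a \<le> MM fa" if "a \<in> A" for a using that finA by (intro Max_ge) auto
    ultimately have "X fa t = {}" by fastforce
    then have "card (X fa t) = 0" by (simp only: card.empty)
    then show "\<bar>real (card (X fa t)) - NN / 2^t\<bar> \<ge> \<mu>" unfolding \<mu>_def by simp
  qed
  also have "\<dots> \<le> NN * (1/2^t) * (1 - 1/2^t) / \<mu>^2" by (rule cheb_X[OF tdf \<mu>0])
  also have "\<dots> \<le> NN * (1/2^t) * 1 / \<mu>^2"
  proof (intro divide_right_mono mult_left_mono)
    show "1 - 1 / 2 ^ t \<le> (1::real)" by simp
  qed auto
  also have "\<dots> = 2^t / NN" unfolding \<mu>_def using N1 by (simp add: field_simps power2_eq_square)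
  also have "\<dots> \<le> 1/32"
  proof -
    have "(2::real) ^ LL = 2 ^ (t + 6)" unfolding t_def using False by simp
    then have "(2::real) ^ t * 64 < 2 * NN" using NLr(2) by (simp add: power_add)
    then show ?thesis using N1 by (simp add: field_simps)
  qed
  finally show ?thesis .
qed

lemma B2: "pr Fs (\<lambda>fa. LL + 7 \<le> MM fa) \<le> 1/128"
proof -
  have "pr Fs (\<lambda>fa. LL + 7 \<le> MM fa) \<le> pr Fs (\<lambda>fa. \<exists>a\<in>A. LL + 7 \<le> ff fa a)"
  proof (rule pr_mono[OF finFs(1)])
    fix fa assume a: "LL + 7 \<le> MM fa"
    have "MM fa \<in> ff fa ` A" using finA A_ne by (intro Max_in) auto
    then show "\<exists>a\<in>A. LL + 7 \<le> ff fa a" using a by auto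
  qed
  also have "\<dots> \<le> (\<Sum>a\<in>A. pr Fs (\<lambda>fa. LL + 7 \<le> ff fa a))" by (rule pr_exists[OF finFs(1) finA])
  also have "\<dots> \<le> (\<Sum>a\<in>A. 1 / 2^(LL+7))" by (intro sum_mono f_single_le)
  also have "\<dots> = NN / 2^(LL+7)" by simp
  also have "\<dots> \<le> 1/128"
    using NLr(1) by (simp add: power_add field_simps)
  finally show ?thesis .
qed

lemma B3: "(\<Sum>s\<in>{..s_hi}. pr Fs (\<lambda>fa. E1 fa s)) \<le> 1/64"
proof -
  have trm: "pr Fs (\<lambda>fa. E1 fa s) \<le> 9 / (\<epsilon>^2 * NN) * (2^s - 1)" if "s \<le> s_hi" for s
  proof -
    have sdf: "s \<le> df" using that s_hi_df by simp
    define t where "t = \<epsilon>/3 * (NN / 2^s)"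
    have t0: "t > 0" unfolding t_def using eps0 N1 by simp
    have "pr Fs (\<lambda>fa. E1 fa s) \<le> pr Fs (\<lambda>fa. \<bar>real (card (X fa s)) - NN / 2^s\<bar> \<ge> t)"
      unfolding t_def by (intro pr_mono[OF finFs(1)]) auto
    also have "\<dots> \<le> NN * (1/2^s) * (1 - 1/2^s) / t^2" by (rule cheb_X[OF sdf t0])
    also have "\<dots> = 9 / (\<epsilon>^2 * NN) * (2^s - 1)"
      unfolding t_def using N1 eps0 by (simp add: field_simps power2_eq_square)
    finally show ?thesis .
  qed
  have "(\<Sum>s\<in>{..s_hi}. pr Fs (\<lambda>fa. E1 fa s)) \<le> (\<Sum>s\<in>{..s_hi}. 9 / (\<epsilon>^2 * NN) * (2^s - 1))"
    using trm by (intro sum_mono) auto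
  also have "\<dots> = 9 / (\<epsilon>^2 * NN) * (\<Sum>s<Suc s_hi. (2::real)^s - 1)"
    by (simp add: sum_distrib_left lessThan_Suc_atMost)
  also have "\<dots> \<le> 9 / (\<epsilon>^2 * NN) * (2^(s_hi+1) - 2)"
    using eps0 N1 by (intro mult_left_mono sum_pow2_minus1) auto
  also have "\<dots> \<le> 1/64"
  proof (cases "s_hi = 0")
    case True then show ?thesis by simp
  next
    case False
    then have sh: "s_hi + \<beta> = LL + 15" by linarith
    have e: "s_hi + 1 + \<beta> = LL + 16" using sh by simp
    have "(2::real) ^ (s_hi + 1) * bn = 2 ^ (s_hi + 1 + \<beta>)" by (simp add: bn_real power_add)
    also have "\<dots> = 2 ^ (LL + 16)" by (simp only: e)
    also have "\<dots> = 2^LL * 2^16" by (simp add: power_add)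
    also have "\<dots> \<le> (2 * NN) * 2^16"
      using NLr(2) by simp
    finally have p2: "(2::real) ^ (s_hi + 1) * bn \<le> 2^17 * NN" by simp
    have "9 / (\<epsilon>^2 * NN) * (2^(s_hi+1) - 2) \<le> 9 / (\<epsilon>^2 * NN) * 2^(s_hi+1)"
      using eps0 N1 by (intro mult_left_mono) auto
    also have "\<dots> = 9 * (2^(s_hi+1) * bn) / (\<epsilon>^2 * bn * NN)" using N1 eps0 bn_pos
      by (simp add: field_simps)
    also have "\<dots> \<le> 9 * (2^17 * NN) / (\<epsilon>^2 * bn * NN)"
      using p2 eps0 N1 by (intro divide_right_mono) auto
    also have "\<dots> = 9 * 2^17 / (\<epsilon>^2 * bn)" using N1 by simp
    also have "\<dots> \<le> 9 * 2^17 / (9 * 2^23)" using eps_b eps0 by (intro divide_left_mono) auto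
    also have "\<dots> = 1/64" by simp
    finally show ?thesis .
  qed
  finally show ?thesis .
qed

end


context setting
begin

lemma bn4: "(2::real) ^ kk \<ge> real bn ^ 4"
proof -
  have "4 * \<beta> \<le> kk" using kk_ge by linarith
  then have "(2::real) ^ (4 * \<beta>) \<le> 2 ^ kk" by (intro power_increasing) auto
  moreover have "(2::real) ^ (4 * \<beta>) = real bn ^ 4" by (simp add: bn_real power_mult[symmetric] mult.commute)
  ultimately show ?thesis by simp
qed

lemma cc_pow: "(2::real) ^ cc = 32 * real bn ^ 2"
  by (simp add: bn_real power_add power_mult[symmetric] mult.commute)

lemma B4:
  assumes "s_lo \<le> s" "s \<le> s_hi"
  shows "pr (Fs \<times> Gs) (\<lambda>\<omega>. \<not> inj_on (gg (snd \<omega>)) (X (fst \<omega>) s)) \<le> 1/2048"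
proof -
  have sdf: "s \<le> df" using assms(2) s_hi_df by simp
  define Pairs where "Pairs = {p \<in> A \<times> A. fst p \<noteq> snd p}"
  have finP: "finite Pairs" using finA by (simp add: Pairs_def)
  have cP: "card Pairs \<le> NN * NN"
  proof -
    have "card Pairs \<le> card (A \<times> A)" unfolding Pairs_def using finA by (intro card_mono) auto
    then show ?thesis by (simp add: card_cartesian_product)
  qed
  have finFG: "finite (Fs \<times> Gs)" using finFs finGs by simp
  have "pr (Fs \<times> Gs) (\<lambda>\<omega>. \<not> inj_on (gg (snd \<omega>)) (X (fst \<omega>) s))
     \<le> pr (Fs \<times> Gs) (\<lambda>\<omega>. \<exists>p\<in>Pairs. (s \<le> ff (fst \<omega>) (fst p) \<and> s \<le> ff (fst \<omega>) (snd p)) \<and>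
                              gg (snd \<omega>) (fst p) = gg (snd \<omega>) (snd p))"
  proof (rule pr_mono[OF finFG])
    fix \<omega> :: "nat list \<times> nat list"
    assume "\<not> inj_on (gg (snd \<omega>)) (X (fst \<omega>) s)"
    then obtain a a' where "a \<in> X (fst \<omega>) s" "a' \<in> X (fst \<omega>) s" "a \<noteq> a'" "gg (snd \<omega>) a = gg (snd \<omega>) a'"
      unfolding inj_on_def by blast
    then show "\<exists>p\<in>Pairs. (s \<le> ff (fst \<omega>) (fst p) \<and> s \<le> ff (fst \<omega>) (snd p)) \<and>
                              gg (snd \<omega>) (fst p) = gg (snd \<omega>) (snd p)"
      unfolding Pairs_def by (intro bexI[where x="(a, a')"]) auto
  qed
  also have "\<dots> \<le> (\<Sum>p\<in>Pairs. pr (Fs \<times> Gs) (\<lambda>\<omega>. (s \<le> ff (fst \<omega>) (fst p) \<and> s \<le> ff (fst \<omega>) (snd p)) \<and>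
                              gg (snd \<omega>) (fst p) = gg (snd \<omega>) (snd p)))"
    by (rule pr_exists[OF finFG finP])
  also have "\<dots> = (\<Sum>p\<in>Pairs. (1/2^s * (1/2^s)) * (1 / 2^cc))"
  proof (intro sum.cong refl)
    fix p assume p: "p \<in> Pairs"
    then have pa: "fst p \<in> A" "snd p \<in> A" "fst p \<noteq> snd p" unfolding Pairs_def by auto
    have "pr (Fs \<times> Gs) (\<lambda>\<omega>. (s \<le> ff (fst \<omega>) (fst p) \<and> s \<le> ff (fst \<omega>) (snd p)) \<and>
                              gg (snd \<omega>) (fst p) = gg (snd \<omega>) (snd p))
        = pr (Fs \<times> Gs) (\<lambda>(fa, ga). (s \<le> ff fa (fst p) \<and> s \<le> ff fa (snd p)) \<and>
                              gg ga (fst p) = gg ga (snd p))"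
      by (intro pr_cong) (simp add: case_prod_unfold)
    also have "\<dots> = pr Fs (\<lambda>fa. s \<le> ff fa (fst p) \<and> s \<le> ff fa (snd p)) * pr Gs (\<lambda>ga. gg ga (fst p) = gg ga (snd p))"
      by (rule pr_prod[OF finFs(1) finGs(1) finFs(2) finGs(2)])
    also have "pr Fs (\<lambda>fa. s \<le> ff fa (fst p) \<and> s \<le> ff fa (snd p)) = 1/2^s * (1/2^s)"
      using f_pair[OF pa(1,2) sdf] pa(3) by simp
    also have "pr Gs (\<lambda>ga. gg ga (fst p) = gg ga (snd p)) = 1 / 2^cc"
      using H_pair_eq[OF Pg_irr Pg_deg, of "fst p" "snd p" cc] pa A_g Pg_c by auto
    finally show "pr (Fs \<times> Gs) (\<lambda>\<omega>. (s \<le> ff (fst \<omega>) (fst p) \<and> s \<le> ff (fst \<omega>) (snd p)) \<and>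
                              gg (snd \<omega>) (fst p) = gg (snd \<omega>) (snd p)) = (1/2^s * (1/2^s)) * (1 / 2^cc)" .
  qed
  also have "\<dots> = card Pairs * ((1/2^s * (1/2^s)) * (1 / 2^cc))" by simp
  also have "\<dots> \<le> (NN * NN) * ((1/2^s * (1/2^s)) * (1 / 2^cc))"
    using cP by (intro mult_right_mono) (auto simp flip: of_nat_mult)
  also have "\<dots> = (NN / 2^s)^2 / (32 * real bn ^ 2)" unfolding cc_pow[symmetric]
    by (simp add: power2_eq_square)
  also have "\<dots> \<le> (real bn / 8)^2 / (32 * real bn ^ 2)"
    using mu_bound[OF assms(1)] bn_pos by (intro divide_right_mono power_mono) auto
  also have "\<dots> = 1/2048" using bn_pos by (simp add: power2_eq_square field_simps)
  finally show ?thesis .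
qed


lemma hh_lt: "hh ha x < bn" by (simp add: hash_H_def bn_def')

lemma B5:
  assumes "s_lo \<le> s"
  shows "pr (Fs \<times> (Gs \<times> Hs)) (\<lambda>\<omega>. E3 (fst \<omega>) (fst (snd \<omega>)) (snd (snd \<omega>)) s) \<le> 1/2^19"
proof (rule pr_bound_fst)
  show "finite Fs" "Fs \<noteq> {}" "finite (Gs \<times> Hs)" "Gs \<times> Hs \<noteq> {}" using finFs finGs finHs by auto
  fix fa assume fa: "fa \<in> Fs"
  show "pr (Gs \<times> Hs) (\<lambda>gh. E3 (fst (fa, gh)) (fst (snd (fa, gh))) (snd (snd (fa, gh))) s) \<le> 1/2^19"
  proof (rule pr_bound_fst[OF finGs(1) finHs(1) finGs(2) finHs(2)])
    fix ga assume ga: "ga \<in> Gs"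
    show "pr Hs (\<lambda>ha. E3 (fst (fa, ga, ha)) (fst (snd (fa, ga, ha))) (snd (snd (fa, ga, ha))) s) \<le> 1/2^19"
    proof (cases "inj_on (gg ga) (X fa s) \<and> \<not> E1 fa s")
      case False
      then have "pr Hs (\<lambda>ha. E3 (fst (fa, ga, ha)) (fst (snd (fa, ga, ha))) (snd (snd (fa, ga, ha))) s) = pr Hs (\<lambda>ha. False)"
        by (intro pr_cong) auto
      then show ?thesis by (simp add: pr_false)
    next
      case True
      define S where "S = gg ga ` X fa s"
      define Z where "Z = card (X fa s)"
      define \<mu> where "\<mu> = real NN / 2^s"
      have \<mu>0: "\<mu> > 0" unfolding \<mu>_def using N1 by simp
      have \<mu>b: "\<mu> \<le> real bn / 8" unfolding \<mu>_def by (rule mu_bound[OF assms])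
      have cS: "card S = Z" unfolding S_def Z_def using True by (simp add: card_image)
      have finS: "finite S" unfolding S_def using finA by simp
      have Zmu: "\<bar>real Z - \<mu>\<bar> \<le> \<epsilon>/3 * \<mu>" using True unfolding Z_def \<mu>_def by simp
      have e3: "\<epsilon>/3 * \<mu> \<le> 1/3 * \<mu>" using eps1 \<mu>0 by (intro mult_right_mono) auto
      have Zlow: "real Z \<ge> 2/3 * \<mu>" using Zmu e3 abs_ge_minus_self[of "real Z - \<mu>"] by linarith
      have Zup: "real Z \<le> 4/3 * \<mu>" using Zmu e3 abs_ge_self[of "real Z - \<mu>"] by linarith
      have Z1: "Z \<ge> 1" using Zlow \<mu>0 by (cases Z) auto
      have Zb: "4 * Z \<le> bn"
      proof -
        have "real (4 * Z) \<le> real bn" using Zup \<mu>b by simp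
        then show ?thesis by linarith
      qed
      have kw: "pr Hs (\<lambda>ha. \<forall>x\<in>T. hh ha x \<in> B) = (real (card B) / real bn) ^ card T"
        if T: "T \<subseteq> S" "card T \<le> kk" and B: "B \<subseteq> {..<bn}" for T B
      proof -
        have s1: "S \<subseteq> {..<2^cc}" unfolding S_def by (auto simp: hash_H_def)
        have s2: "(2::nat)^cc \<le> 2^dh" using dh_c by (intro power_increasing) auto
        have Td: "T \<subseteq> {..<2^dh}"
        proof
          fix x assume "x \<in> T"
          then have "x < 2^cc" using T(1) s1 by auto
          then show "x \<in> {..<2^dh}" using s2 less_le_trans by blast
        qed
        have "B \<subseteq> {..<2^\<beta>}" using B by (simp add: bn_def')
        from H_kwise[OF Ph_irr Ph_deg Td T(2) this Ph_be]
        show ?thesis by (simp add: bn_real)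
      qed
      have bn2: "real bn \<ge> 2" using beta27 bn_real
        by (metis numeral_le_iff one_le_numeral power_increasing power_one_right semiring_norm(69) order_trans le_numeral_extra(1) one_add_one dual_order.trans)
      have ar: "\<epsilon>/3 * real Z > real bn / 2^kk"
               "(real Z^2 / real bn + 3 * real bn^2 / 2^kk) / (\<epsilon>/3 * real Z - real bn / 2^kk)^2 \<le> 1 / 2^19"
        using arith_E3[OF bn2 bn4 eps0 eps_b, of "real Z"] Z1 by auto
      have kk1: "kk \<ge> 1" using kk_ge beta27 by linarith
      have "pr Hs (\<lambda>ha. E3 (fst (fa, ga, ha)) (fst (snd (fa, ga, ha))) (snd (snd (fa, ga, ha))) s)
          = pr Hs (\<lambda>ha. \<bar>real (card (hh ha ` S)) - real bn * (1 - (1 - 1 / real bn) ^ card S)\<bar> > \<epsilon>/3 * real (card S))"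
        using True unfolding S_def by (intro pr_cong) (simp add: cS[unfolded S_def] Z_def)
      also have "\<dots> \<le> (real (card S)^2 / real bn + 3 * real bn^2 / 2^kk) / (\<epsilon>/3 * real (card S) - real bn / 2^kk)^2"
      proof (rule balls_bins[OF finHs(1) finHs(2) finS])
        show "\<And>\<omega> x. \<omega> \<in> Hs \<Longrightarrow> x \<in> S \<Longrightarrow> hh \<omega> x < bn" by (rule hh_lt)
        show "\<And>T B. T \<subseteq> S \<Longrightarrow> card T \<le> kk \<Longrightarrow> B \<subseteq> {..<bn} \<Longrightarrow>
               pr Hs (\<lambda>\<omega>. \<forall>x\<in>T. hh \<omega> x \<in> B) = (real (card B) / real bn) ^ card T" by (rule kw)
        show "1 \<le> card S" "4 * card S \<le> bn" "1 \<le> kk" using Z1 Zb kk1 cS by auto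
        show "real bn / 2 ^ kk < \<epsilon> / 3 * real (card S)" using ar(1) cS by simp
      qed
      also have "\<dots> \<le> 1 / 2^19" using ar(2) cS by simp
      finally show ?thesis .
    qed
  qed
qed

end


lemma pr_fst2:
  assumes "finite A" "finite B" "finite C" "A \<noteq> {}" "B \<noteq> {}" "C \<noteq> {}"
  shows "pr (A \<times> (B \<times> C)) (\<lambda>\<omega>. P (fst \<omega>) (fst (snd \<omega>))) = pr (A \<times> B) (\<lambda>\<omega>. P (fst \<omega>) (snd \<omega>))"
proof -
  define F where "F = (\<lambda>(x :: 'a \<times> 'b, c :: 'c). (fst x, (snd x, c)))"
  have eq: "{\<omega> \<in> A \<times> (B \<times> C). P (fst \<omega>) (fst (snd \<omega>))} = F ` ({x \<in> A \<times> B. P (fst x) (snd x)} \<times> C)"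
    unfolding F_def by (auto simp: image_iff)
  have inj: "inj_on F ({x \<in> A \<times> B. P (fst x) (snd x)} \<times> C)" unfolding F_def by (auto simp: inj_on_def)
  have "card {\<omega> \<in> A \<times> (B \<times> C). P (fst \<omega>) (fst (snd \<omega>))} = card {x \<in> A \<times> B. P (fst x) (snd x)} * card C"
    unfolding eq using inj by (simp add: card_image card_cartesian_product)
  then show ?thesis unfolding pr_def using assms by (simp add: card_cartesian_product)
qed

context setting
begin

theorem main:
  "pr (Fs \<times> (Gs \<times> Hs)) (\<lambda>\<omega>. \<omega> \<in> {(fa, ga, ha). \<exists>q::int. 0 \<le> q \<and> q \<le> q_max bn A \<and>
       \<bar>Y_c bn A (ff fa) (gg ga) (hh ha) q - ereal (real NN)\<bar> > ereal (\<epsilon> * real NN)}) \<le> 1/16"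
proof -
  define \<Omega> where "\<Omega> = Fs \<times> (Gs \<times> Hs)"
  have fin\<Omega>: "finite \<Omega>" unfolding \<Omega>_def using finFs finGs finHs by simp
  define W where "W = {s_lo..s_hi}"
  define G1 where "G1 = (\<lambda>\<omega>::nat list \<times> nat list \<times> nat list. int (MM (fst \<omega>)) < int LL - 6)"
  define G2 where "G2 = (\<lambda>\<omega>::nat list \<times> nat list \<times> nat list. LL + 7 \<le> MM (fst \<omega>))"
  define G3 where "G3 = (\<lambda>\<omega>::nat list \<times> nat list \<times> nat list. \<exists>s\<in>{..s_hi}. E1 (fst \<omega>) s)"
  define G4 where "G4 = (\<lambda>\<omega>::nat list \<times> nat list \<times> nat list. \<exists>s\<in>W. \<not> inj_on (gg (fst (snd \<omega>))) (X (fst \<omega>) s))"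
  define G5 where "G5 = (\<lambda>\<omega>::nat list \<times> nat list \<times> nat list. \<exists>s\<in>W. E3 (fst \<omega>) (fst (snd \<omega>)) (snd (snd \<omega>)) s)"
  have cover: "G1 \<omega> \<or> G2 \<omega> \<or> G3 \<omega> \<or> G4 \<omega> \<or> G5 \<omega>"
    if bad: "\<omega> \<in> {(fa, ga, ha). \<exists>q::int. 0 \<le> q \<and> q \<le> q_max bn A \<and>
       \<bar>Y_c bn A (ff fa) (gg ga) (hh ha) q - ereal (real NN)\<bar> > ereal (\<epsilon> * real NN)}" for \<omega>
  proof (rule ccontr)
    assume ng: "\<not> (G1 \<omega> \<or> G2 \<omega> \<or> G3 \<omega> \<or> G4 \<omega> \<or> G5 \<omega>)"
    obtain fa ga ha where \<omega>: "\<omega> = (fa, ga, ha)" by (cases \<omega>) auto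
    obtain q :: int where q: "0 \<le> q" "q \<le> q_max bn A"
      and qb: "\<bar>Y_c bn A (ff fa) (gg ga) (hh ha) q - ereal (real NN)\<bar> > ereal (\<epsilon> * real NN)"
      using bad unfolding \<omega> by auto
    define M where "M = MM fa"
    have Mlo: "int M \<ge> int LL - 6" using ng unfolding G1_def M_def \<omega> by auto
    have Mhi: "M \<le> LL + 6" using ng unfolding G2_def M_def \<omega> by auto
    define s where "s = nat (int M - int \<beta> + 9)"
    have sW: "s \<in> W" unfolding W_def s_def using Mlo Mhi by auto
    have sh: "s \<in> {..s_hi}" using sW unfolding W_def by auto
    have nE1: "\<not> E1 fa s" using ng sh unfolding G3_def \<omega> by auto
    have inj: "inj_on (gg ga) (X fa s)" using ng sW unfolding G4_def \<omega> by auto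
    have nE3: "\<not> E3 fa ga ha s" using ng sW unfolding G5_def \<omega> by auto
    define Z where "Z = card (X fa s)"
    define p where "p = card (hh ha ` gg ga ` X fa s)"
    have pZ: "\<bar>real p - real bn * (1 - (1 - 1 / real bn) ^ Z)\<bar> \<le> \<epsilon>/3 * real Z"
      using nE3 inj nE1 unfolding p_def Z_def by auto
    have Zmu: "\<bar>real Z - real NN / 2^s\<bar> \<le> \<epsilon>/3 * (real NN / 2^s)" using nE1 unfolding Z_def by auto
    have slo: "s_lo \<le> s" using sW unfolding W_def by auto
    have bn8: "real bn \<ge> 8"
    proof -
      have "(2::real)^3 \<le> 2^\<beta>" using beta27 by (intro power_increasing) auto
      then show ?thesis by (simp add: bn_real)
    qed
    have acc: "real p < real bn" "\<bar>2^s * rho_inv bn (real p) - real NN\<bar> \<le> \<epsilon> * real NN"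
      using accuracy[of bn \<epsilon> "real NN" "2^s" "real NN / 2^s" Z "real p"] bn8 eps0 eps1 N1
        mu_bound[OF slo] Zmu pZ by auto
    have hb: "\<forall>a\<in>A. hh ha (gg ga a) < bn" using hh_lt by auto
    have "\<not> (\<bar>Y_c bn A (ff fa) (gg ga) (hh ha) q - ereal (real NN)\<bar> > ereal (\<epsilon> * real NN))"
    proof (rule det_Y[where h="hh ha" and g="gg ga" and f="ff fa", OF finA A_ne hb bn_def' beta27 NLr(3)])
      show "int LL - 6 \<le> int (Max (ff fa ` A))" using Mlo unfolding M_def .
      show "s = nat (int (Max (ff fa ` A)) - int \<beta> + 9)" unfolding s_def M_def ..
      show "p = card (hh ha ` gg ga ` {a \<in> A. s \<le> ff fa a})" unfolding p_def ..
      show "p < bn" using acc(1) by simp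
      show "\<bar>2 ^ s * rho_inv bn (real p) - real NN\<bar> \<le> \<epsilon> * real NN" by (rule acc(2))
    qed (use q in auto)
    then show False using qb by simp
  qed
  have "pr \<Omega> (\<lambda>\<omega>. \<omega> \<in> {(fa, ga, ha). \<exists>q::int. 0 \<le> q \<and> q \<le> q_max bn A \<and>
       \<bar>Y_c bn A (ff fa) (gg ga) (hh ha) q - ereal (real NN)\<bar> > ereal (\<epsilon> * real NN)})
     \<le> pr \<Omega> (\<lambda>\<omega>. G1 \<omega> \<or> G2 \<omega> \<or> G3 \<omega> \<or> G4 \<omega> \<or> G5 \<omega>)"
    by (rule pr_mono[OF fin\<Omega>]) (rule cover)
  also have "\<dots> \<le> pr \<Omega> G1 + pr \<Omega> G2 + pr \<Omega> G3 + pr \<Omega> G4 + pr \<Omega> G5"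
    using pr_disj[OF fin\<Omega>, of G1 "\<lambda>\<omega>. G2 \<omega> \<or> G3 \<omega> \<or> G4 \<omega> \<or> G5 \<omega>"]
      pr_disj[OF fin\<Omega>, of G2 "\<lambda>\<omega>. G3 \<omega> \<or> G4 \<omega> \<or> G5 \<omega>"]
      pr_disj[OF fin\<Omega>, of G3 "\<lambda>\<omega>. G4 \<omega> \<or> G5 \<omega>"] pr_disj[OF fin\<Omega>, of G4 G5]
    by linarith
  also have "\<dots> \<le> 1/32 + 1/128 + 1/64 + 13 * (1/2048) + 13 * (1/2^19)"
  proof -
    have p1: "pr \<Omega> G1 \<le> 1/32"
      unfolding \<Omega>_def G1_def using B1 pr_fst[OF finFs(1) _ finFs(2), of "Gs \<times> Hs" "\<lambda>fa. int (MM fa) < int LL - 6"]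
        finGs finHs by simp
    have p2: "pr \<Omega> G2 \<le> 1/128"
      unfolding \<Omega>_def G2_def using B2 pr_fst[OF finFs(1) _ finFs(2), of "Gs \<times> Hs" "\<lambda>fa. LL + 7 \<le> MM fa"]
        finGs finHs by simp
    have p3: "pr \<Omega> G3 \<le> 1/64"
    proof -
      have "pr \<Omega> G3 \<le> (\<Sum>s\<in>{..s_hi}. pr \<Omega> (\<lambda>\<omega>. E1 (fst \<omega>) s))"
        unfolding G3_def by (rule pr_exists[OF fin\<Omega>]) simp
      also have "\<dots> = (\<Sum>s\<in>{..s_hi}. pr Fs (\<lambda>fa. E1 fa s))"
        unfolding \<Omega>_def
        by (intro sum.cong refl pr_fst[OF finFs(1) _ finFs(2)]) (use finGs finHs in auto)
      also have "\<dots> \<le> 1/64" by (rule B3)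
      finally show ?thesis .
    qed
    have p4: "pr \<Omega> G4 \<le> 13 * (1/2048)"
    proof -
      have "pr \<Omega> G4 \<le> (\<Sum>s\<in>W. pr \<Omega> (\<lambda>\<omega>. \<not> inj_on (gg (fst (snd \<omega>))) (X (fst \<omega>) s)))"
        unfolding G4_def by (rule pr_exists[OF fin\<Omega>]) (simp add: W_def)
      also have "\<dots> = (\<Sum>s\<in>W. pr (Fs \<times> Gs) (\<lambda>\<omega>. \<not> inj_on (gg (snd \<omega>)) (X (fst \<omega>) s)))"
        unfolding \<Omega>_def
        by (intro sum.cong refl pr_fst2[OF finFs(1) finGs(1) finHs(1) finFs(2) finGs(2) finHs(2),
              of "\<lambda>fa ga. \<not> inj_on (gg ga) (X fa _)"])
      also have "\<dots> \<le> real (card W) * (1/2048)"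
        by (rule sum_bounded_above) (use B4 in \<open>auto simp: W_def\<close>)
      also have "\<dots> \<le> 13 * (1/2048)" using card_window unfolding W_def by simp
      finally show ?thesis .
    qed
    have p5: "pr \<Omega> G5 \<le> 13 * (1/2^19)"
    proof -
      have "pr \<Omega> G5 \<le> (\<Sum>s\<in>W. pr \<Omega> (\<lambda>\<omega>. E3 (fst \<omega>) (fst (snd \<omega>)) (snd (snd \<omega>)) s))"
        unfolding G5_def by (rule pr_exists[OF fin\<Omega>]) (simp add: W_def)
      also have "\<dots> \<le> real (card W) * (1/2^19)"
        unfolding \<Omega>_def by (rule sum_bounded_above) (use B5 in \<open>auto simp: W_def\<close>)
      also have "\<dots> \<le> 13 * (1/2^19)" using card_window unfolding W_def by simp
      finally show ?thesis .
    qed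
    show ?thesis using p1 p2 p3 p4 p5 by linarith
  qed
  also have "\<dots> \<le> 1/16" by simp
  finally show ?thesis unfolding \<Omega>_def .
qed

end


theorem lemma14:
  fixes n :: nat and \<epsilon> :: real and A :: "nat set"
    and Pf Pg Ph :: "bit poly" and df dg dh :: nat
  assumes "n \<ge> 1" and "0 < \<epsilon>" and "\<epsilon> < 1"
    and "A \<subseteq> {..<n}" and "A \<noteq> {}"
    and "irreducible Pf" and "degree Pf = df" and "2 ^ df \<ge> n"
    and "irreducible Pg" and "degree Pg = dg" and "2 ^ dg \<ge> n"
    and "dg \<ge> 5 + 2 * b_exp \<epsilon>"
    and "irreducible Ph" and "degree Ph = dh" and "2 ^ dh \<ge> 2 ^ 5 * b_of \<epsilon> ^ 2"
    and "dh \<ge> b_exp \<epsilon>"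
  shows "measure_pmf.prob
           (pmf_of_set (seeds df 2 \<times> seeds dg 2 \<times> seeds dh (k_of \<epsilon>)))
           {(fa, ga, ha).
              \<exists>q::int. 0 \<le> q \<and> q \<le> q_max (b_of \<epsilon>) A \<and>
                \<bar>Y_c (b_of \<epsilon>) A (hash_G Pf df fa) (hash_H Pg (5 + 2 * b_exp \<epsilon>) ga)
                     (hash_H Ph (b_exp \<epsilon>) ha) q - ereal (real (card A))\<bar>
                > ereal (\<epsilon> * real (card A))}
         \<le> 1 / 16"
proof -
  interpret setting n \<epsilon> A Pf Pg Ph df dg dh
    using assms by unfold_locales auto
  define \<Omega> where "\<Omega> = seeds df 2 \<times> seeds dg 2 \<times> seeds dh (k_of \<epsilon>)"
  define E where "E = {(fa, ga, ha).
              \<exists>q::int. 0 \<le> q \<and> q \<le> q_max (b_of \<epsilon>) A \<and>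
                \<bar>Y_c (b_of \<epsilon>) A (hash_G Pf df fa) (hash_H Pg (5 + 2 * b_exp \<epsilon>) ga)
                     (hash_H Ph (b_exp \<epsilon>) ha) q - ereal (real (card A))\<bar>
                > ereal (\<epsilon> * real (card A))}"
  have ne: "\<Omega> \<noteq> {}" "finite \<Omega>" unfolding \<Omega>_def using finFs finGs finHs by auto
  have "measure_pmf.prob (pmf_of_set \<Omega>) E = real (card (\<Omega> \<inter> E)) / real (card \<Omega>)"
    by (rule measure_pmf_of_set[OF ne])
  also have "\<dots> = pr \<Omega> (\<lambda>\<omega>. \<omega> \<in> E)" unfolding pr_def
    by (simp add: Int_def)
  also have "\<dots> \<le> 1/16" unfolding \<Omega>_def E_def by (rule main)
  finally show ?thesis unfolding \<Omega>_def E_def .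
qed

end
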